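(* Let $m\ge7$ be odd, $h=\frac{m-1}{2}$, $f_5(x)=x^{2^{2h}-2^h+1}\in\mathbb{F}_{2^m}[x]$, and let $s^\infty$ be the sequence $s_t=\operatorname{Tr}(f_5(\alpha^t+1))$, $t\ge0$. Let $L_s=1+m(2^{(m-1)/2}-1)$ if $m\equiv1\pmod4$ and $L_s=1+m(2^{(m-1)/2}-3)$ if $m\equiv3\pmod4$. Then the binary cyclic code $\mathcal{C}_s$ has parameters $[2^m-1,\,2^m-1-L_s,\,d(\mathcal{C}_s)]$ with $2^{(m-3)/2}\le d(\mathcal{C}_s)\le L_s$.
   Context: Let $v=2^m-1$, $\alpha$ a primitive element of $\mathbb{F}_{2^m}$, and $\operatorname{Tr}(x)=\sum_{i=0}^{m-1}x^{2^i}$ the absolute trace from $\mathbb{F}_{2^m}$ to $\mathbb{F}_2$. For a polynomial $F$ over $\mathbb{F}_{2^m}$ the binary sequence $s^\infty=(s_t)_{t\ge0}$ is defined by $s_t=\operatorname{Tr}(F(\alpha^t+1))$; it is periodic with period dividing $v$. Its minimal polynomial $g_s(x)$ is the polynomial $1+c_1x+\dots+c_Lx^L\in\mathbb{F}_2[x]$ of least degree $L$ such that $s_i+c_1s_{i-1}+\dots+c_Ls_{i-L}=0$ for all $i\ge L$; its degree $L_s$ is the linear span of $s^\infty$. $\mathcal{C}_s$ denotes the binary cyclic code of length $v$ with generator polynomial $g_s(x)$. $d(\mathcal{C})$ denotes minimum Hamming distance. *)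

theory Defs
  imports "HOL-Library.Z2" "HOL-Computational_Algebra.Polynomial"
begin

text \<open>Absolute trace from F_{2^m} to F_2 (values 0 or 1 in the big field).\<close>
definition trace2 :: "nat \<Rightarrow> 'a::field \<Rightarrow> 'a" where
  "trace2 m x = (\<Sum>i<m. x ^ (2 ^ i))"

definition primitive_elem :: "'a::{finite,field} \<Rightarrow> bool" where
  "primitive_elem (a::'a) \<longleftrightarrow> a \<noteq> 0 \<and> (\<forall>k. 0 < k \<and> k < card (UNIV::'a set) - 1 \<longrightarrow> a ^ k \<noteq> 1)"

definition trace_seq :: "nat \<Rightarrow> ('a::field \<Rightarrow> 'a) \<Rightarrow> 'a \<Rightarrow> nat \<Rightarrow> bit" where
  "trace_seq m F a t = (if trace2 m (F (a ^ t + 1)) = 0 then 0 else 1)"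

text \<open>g = 1 + c_1 x + ... + c_L x^L gives the recurrence
  s_i + c_1 s_{i-1} + ... + c_L s_{i-L} = 0 for all i >= L, with L = degree g.\<close>
definition lin_rec :: "bit poly \<Rightarrow> (nat \<Rightarrow> bit) \<Rightarrow> bool" where
  "lin_rec g s \<longleftrightarrow> coeff g 0 = 1 \<and>
     (\<forall>i\<ge>degree g. (\<Sum>j\<le>degree g. coeff g j * s (i - j)) = 0)"

definition is_min_poly :: "(nat \<Rightarrow> bit) \<Rightarrow> bit poly \<Rightarrow> bool" where
  "is_min_poly s g \<longleftrightarrow> lin_rec g s \<and> (\<forall>g'. lin_rec g' s \<longrightarrow> degree g \<le> degree g')"

definition cyclic_code :: "nat \<Rightarrow> bit poly \<Rightarrow> bit poly set" where
  "cyclic_code n g = {c. (c = 0 \<or> degree c < n) \<and> g dvd c}"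

definition hweight :: "bit poly \<Rightarrow> nat" where
  "hweight c = card {i. coeff c i \<noteq> 0}"

definition min_dist :: "bit poly set \<Rightarrow> nat" where
  "min_dist C = Min (hweight ` (C - {0}))"

end

theory Submission
  imports Defs "HOL-Library.Nat_Bijection"
begin


lemma fin_fermat1:
  fixes x :: "'a::{finite,field}"
  assumes "x \<noteq> 0"
  shows "x ^ (card (UNIV::'a set) - 1) = 1"
proof -
  let ?N = "UNIV - {0::'a}"
  have bij: "bij_betw (\<lambda>y. x * y) ?N ?N"
  proof -
    have "y \<in> (\<lambda>y. x * y) ` ?N" if "y \<noteq> 0" for y
      by (rule image_eqI[where x="y/x"]) (use assms that in auto)
    then show ?thesis unfolding bij_betw_def inj_on_def using assms by auto
  qed
  have "(\<Prod>y\<in>?N. x * y) = (\<Prod>y\<in>?N. y)"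
    using prod.reindex_bij_betw[OF bij, of "\<lambda>y. y"] by simp
  moreover have "(\<Prod>y\<in>?N. x * y) = x ^ card ?N * (\<Prod>y\<in>?N. y)"
    by (simp add: prod.distrib)
  moreover have "card ?N = card (UNIV::'a set) - 1" by (simp add: card_Diff_singleton)
  moreover have "(\<Prod>y\<in>?N. y) \<noteq> 0" by simp
  ultimately show ?thesis by simp
qed

lemma fin_fermat:
  fixes x :: "'a::{finite,field}"
  shows "x ^ card (UNIV::'a set) = x"
proof (cases "x = 0")
  case True then show ?thesis using card_gt_0_iff[of "UNIV::'a set"] by auto
next
  case False
  have "card (UNIV::'a set) = Suc (card (UNIV::'a set) - 1)" using card_gt_0_iff[of "UNIV::'a set"] by auto
  then have "x ^ card (UNIV::'a set) = x * x ^ (card (UNIV::'a set) - 1)" by (metis power_Suc)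
  then show ?thesis using fin_fermat1[OF False] by simp
qed


lemma char2_of_card:
  fixes dummy :: "'a::{finite,field}"
  assumes "card (UNIV::'a set) = 2 ^ m" "m > 0"
  shows "(2::'a) = 0"
proof -
  have "(-1::'a) ^ (2^m) = -1" using fin_fermat[of "-1::'a"] assms by simp
  moreover have "even ((2::nat)^m)" using assms by simp
  ultimately have "(1::'a) = -1" by simp
  then show ?thesis by (metis add_eq_0_iff one_add_one)
qed

context
  fixes dummy :: "'a::field"
  assumes two: "(2::'a) = 0"
begin

lemma c2_neg: "- (x::'a) = x"
  using two by (metis add_eq_0_iff mult_2 mult_zero_left)

lemma c2_add_self: "(x::'a) + x = 0"
  using two by (metis mult_2 mult_zero_left)

lemma frob_add: "((a::'a) + b) ^ (2^i) = a ^ (2^i) + b ^ (2^i)"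
proof (induction i arbitrary: a b)
  case 0 then show ?case by simp
next
  case (Suc i)
  have sq: "((x::'a) + y) ^ 2 = x^2 + y^2" for x y
    by (simp add: power2_sum two)
  have "(a + b) ^ (2^Suc i) = ((a+b)^2) ^ (2^i)"
    by (simp add: power_mult[symmetric] mult.commute)
  also have "\<dots> = (a^2)^(2^i) + (b^2)^(2^i)" by (simp only: sq Suc.IH)
  also have "\<dots> = a ^ (2^Suc i) + b ^ (2^Suc i)" by (simp add: power_mult[symmetric] mult.commute)
  finally show ?case .
qed

lemma frob_sum: "finite A \<Longrightarrow> (\<Sum>x\<in>A. (f x::'a)) ^ (2^i) = (\<Sum>x\<in>A. f x ^ (2^i))"
  by (induction A rule: finite_induct) (simp_all add: frob_add)

lemma of_bit_add: "(of_bit (a + b) :: 'a) = of_bit a + of_bit b"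
  by (cases a; cases b) (simp_all add: c2_add_self)

lemma of_bit_mult: "(of_bit (a * b) :: 'a) = of_bit a * of_bit b"
  by (cases a; cases b) simp_all

lemma of_bit_sum: "(of_bit (\<Sum>x\<in>A. f x) :: 'a) = (\<Sum>x\<in>A. of_bit (f x))"
proof (induction A rule: infinite_finite_induct)
  case (insert x F)
  show ?case by (simp only: sum.insert[OF insert.hyps] of_bit_add insert.IH)
qed simp_all

lemma of_bit_inj: "(of_bit a :: 'a) = of_bit b \<longleftrightarrow> a = b"
  by (cases a; cases b) simp_all

lemma of_bit_eq0: "(of_bit a :: 'a) = 0 \<longleftrightarrow> a = 0"
  by (cases a) simp_all

lemma of_nat_c2: "(of_nat n :: 'a) = (if odd n then 1 else 0)"
proof (induction n)
  case 0 then show ?case by simp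
next
  case (Suc n) then show ?case by (auto simp: c2_add_self)
qed

end

lemma trace_idem:
  fixes x :: "'a::field"
  assumes two: "(2::'a) = 0" and fx: "x ^ (2^m) = x"
  shows "trace2 m x ^ 2 = trace2 m x"
proof -
  have "trace2 m x ^ 2 = (\<Sum>i<m. (x ^ (2^i)) ^ 2)"
    unfolding trace2_def using frob_sum[OF two, of "{..<m}" "\<lambda>i. x^(2^i)" 1] by simp
  also have "\<dots> = (\<Sum>i<m. x ^ (2^Suc i))"
    by (simp add: power_mult[symmetric] power_Suc2 mult.commute)
  also have "\<dots> = (\<Sum>i\<in>Suc ` {..<m}. x ^ (2^i))" by (simp add: sum.reindex)
  also have "Suc ` {..<m} = {1..m}" by (rule image_Suc_lessThan)
  also have "(\<Sum>i\<in>{1..m}. x ^ (2^i)) = trace2 m x"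
  proof (cases m)
    case 0 then show ?thesis by (simp add: trace2_def)
  next
    case (Suc k)
    have "{1..m} = insert m {1..<m}" "{..<m} = insert 0 {1..<m}" using Suc by auto
    then show ?thesis unfolding trace2_def using fx by simp
  qed
  finally show ?thesis .
qed

lemma trace_01:
  fixes x :: "'a::field"
  assumes two: "(2::'a) = 0" and fx: "x ^ (2^m) = x"
  shows "trace2 m x = 0 \<or> trace2 m x = 1"
proof -
  have "trace2 m x * (trace2 m x - 1) = 0" using trace_idem[OF assms]
    by (simp add: algebra_simps power2_eq_square)
  then show ?thesis by auto
qed


lemma expsum_zero:
  fixes \<beta> a :: "'i \<Rightarrow> 'a::field"
  assumes "finite I" "inj_on \<beta> I" "\<forall>i\<in>I. \<beta> i \<noteq> 0"
    "\<forall>l. L \<le> l \<and> l < L + card I \<longrightarrow> (\<Sum>i\<in>I. a i * \<beta> i ^ l) = 0"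
  shows "\<forall>i\<in>I. a i = 0"
  using assms
proof (induction I arbitrary: a L rule: finite_induct)
  case empty then show ?case by simp
next
  case (insert j F)
  let ?u = "\<lambda>l. (\<Sum>i\<in>insert j F. a i * \<beta> i ^ l)"
  define a' where "a' i = a i * (\<beta> i - \<beta> j)" for i
  have uexp: "?u l = a j * \<beta> j ^ l + (\<Sum>i\<in>F. a i * \<beta> i ^ l)" for l
    using insert.hyps by simp
  have "(\<Sum>i\<in>F. a' i * \<beta> i ^ l) = 0" if "L \<le> l" "l < L + card F" for l
  proof -
    have "(\<Sum>i\<in>F. a' i * \<beta> i ^ l) = (\<Sum>i\<in>F. a i * \<beta> i ^ Suc l) - \<beta> j * (\<Sum>i\<in>F. a i * \<beta> i ^ l)"
      unfolding a'_def by (simp add: sum_distrib_left sum_subtractf algebra_simps)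
    also have "\<dots> = ?u (Suc l) - \<beta> j * ?u l"
      unfolding uexp by (simp add: algebra_simps)
    finally have e: "(\<Sum>i\<in>F. a' i * \<beta> i ^ l) = ?u (Suc l) - \<beta> j * ?u l" .
    have "?u (Suc l) = 0" "?u l = 0"
      using insert.prems(3) insert.hyps that by (auto simp del: power_Suc sum.insert)
    then show ?thesis using e by simp
  qed
  then have "\<forall>i\<in>F. a' i = 0"
    using insert.IH[where a=a' and L=L] insert.prems by (auto simp: inj_on_def)
  then have aF: "\<forall>i\<in>F. a i = 0"
    unfolding a'_def using insert.prems(1) insert.hyps by (auto simp: inj_on_def)
  have "?u L = 0" using insert.prems(3) insert.hyps by auto
  then have "a j * \<beta> j ^ L = 0" using aF unfolding uexp by simp
  then have "a j = 0" using insert.prems(2) by simp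
  then show ?case using aF by simp
qed


definition rot :: "nat \<Rightarrow> nat \<Rightarrow> nat set \<Rightarrow> nat set" where
  "rot m t E = (\<lambda>x. (x + t) mod m) ` E"

definition cnt :: "nat \<Rightarrow> nat set \<Rightarrow> nat set \<Rightarrow> nat" where
  "cnt m D E = card {t. t < m \<and> rot m t E \<subseteq> D}"

lemma rot_rot: "rot m a (rot m b E) = rot m (a + b) E"
  unfolding rot_def image_comp o_def by (auto simp: mod_add_left_eq add.assoc add.commute[of a b])

lemma rot_sub: "m > 0 \<Longrightarrow> rot m t E \<subseteq> {..<m}"
  unfolding rot_def by auto

lemma rot_0: "E \<subseteq> {..<m} \<Longrightarrow> rot m 0 E = E"
  unfolding rot_def by (force simp: image_iff)

lemma rot_m: "E \<subseteq> {..<m} \<Longrightarrow> rot m m E = E"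
proof -
  assume E: "E \<subseteq> {..<m}"
  have "rot m m E = rot m 0 E" unfolding rot_def by simp
  then show ?thesis using rot_0[OF E] by simp
qed

lemma rot_mod: "rot m (t mod m) E = rot m t E"
  unfolding rot_def by (simp add: mod_add_right_eq)

lemma rot_cong: "t mod m = t' mod m \<Longrightarrow> rot m t E = rot m t' E"
  by (metis rot_mod)

lemma rot_mod_add: "rot m (b mod m + a) E = rot m (b + a) E"
  by (rule rot_cong) (simp add: mod_add_left_eq)

lemma rot_inv: "E \<subseteq> {..<m} \<Longrightarrow> t \<le> m \<Longrightarrow> rot m (m - t) (rot m t E) = E"
  by (simp add: rot_rot rot_m)

lemma rot_mono: "A \<subseteq> B \<Longrightarrow> rot m t A \<subseteq> rot m t B"
  unfolding rot_def by auto

lemma rot_inj: "A \<subseteq> {..<m} \<Longrightarrow> B \<subseteq> {..<m} \<Longrightarrow> t \<le> m \<Longrightarrow> rot m t A = rot m t B \<Longrightarrow> A = B"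
  by (metis rot_inv)

lemma rot_empty_iff: "rot m t E = {} \<longleftrightarrow> E = {}"
  unfolding rot_def by auto

lemma rot_subset_iff:
  assumes "A \<subseteq> {..<m}" "B \<subseteq> {..<m}" "t \<le> m"
  shows "rot m t A \<subseteq> rot m t B \<longleftrightarrow> A \<subseteq> B"
proof
  assume "rot m t A \<subseteq> rot m t B"
  then have "rot m (m-t) (rot m t A) \<subseteq> rot m (m-t) (rot m t B)" by (rule rot_mono)
  then show "A \<subseteq> B" using rot_inv assms by metis
qed (rule rot_mono)

lemma cnt_rot:
  assumes m: "m > 0" and E: "E \<subseteq> {..<m}" and D: "D \<subseteq> {..<m}"
  shows "cnt m D (rot m a E) = cnt m D E"
proof -
  let ?T = "{t. t < m \<and> rot m t E \<subseteq> D}"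
  let ?U = "{t. t < m \<and> rot m t (rot m a E) \<subseteq> D}"
  have "bij_betw (\<lambda>t. (t + a) mod m) ?U ?T"
  proof (rule bij_betw_byWitness[where f'="\<lambda>t. (t + (m - a mod m)) mod m"])
    show "\<forall>x\<in>?U. (((x + a) mod m) + (m - a mod m)) mod m = x"
    proof
      fix x assume "x \<in> ?U"
      then have "x < m" by simp
      have "((x + a) mod m + (m - a mod m)) mod m = (x + a + (m - a mod m)) mod m"
        by (simp add: mod_add_left_eq)
      also have "x + a + (m - a mod m) = (x + m) + a div m * m"
        using div_mult_mod_eq[of a m] mod_less_divisor[OF m, of a] by linarith
      also have "((x + m) + a div m * m) mod m = x" using \<open>x < m\<close> by simp
      finally show "((x + a) mod m + (m - a mod m)) mod m = x" .
    qed
    show "\<forall>x\<in>?T. ((x + (m - a mod m)) mod m + a) mod m = x"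
    proof
      fix x assume "x \<in> ?T"
      then have "x < m" by simp
      have "((x + (m - a mod m)) mod m + a) mod m = (x + (m - a mod m) + a mod m) mod m"
        by (simp add: mod_add_left_eq mod_add_right_eq)
      also have "x + (m - a mod m) + a mod m = x + m" using mod_less_divisor[OF m, of a] by linarith
      finally show "((x + (m - a mod m)) mod m + a) mod m = x" using \<open>x < m\<close> by simp
    qed
    show "(\<lambda>t. (t + a) mod m) ` ?U \<subseteq> ?T"
      using m by (auto simp: rot_rot rot_mod)
    show "(\<lambda>t. (t + (m - a mod m)) mod m) ` ?T \<subseteq> ?U"
    proof
      fix y assume "y \<in> (\<lambda>t. (t + (m - a mod m)) mod m) ` ?T"
      then obtain x where x: "x \<in> ?T" "y = (x + (m - a mod m)) mod m" by auto
      have "rot m y (rot m a E) = rot m (x + (m - a mod m) + a) E"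
        using x by (simp add: rot_rot rot_mod_add)
      also have "\<dots> = rot m ((x + (m - a mod m) + a) mod m) E" by (simp add: rot_mod)
      also have "(x + (m - a mod m) + a) mod m = x"
      proof -
        have "(x + (m - a mod m) + a) mod m = (x + (m - a mod m) + a mod m) mod m"
          by (simp add: mod_add_right_eq)
        also have "x + (m - a mod m) + a mod m = x + m" using mod_less_divisor[OF m, of a] by linarith
        finally show ?thesis using x by simp
      qed
      finally show "y \<in> ?U" using x m by auto
    qed
  qed
  then show ?thesis unfolding cnt_def by (rule bij_betw_same_card)
qed


lemma cnt_rotD:
  assumes m: "m > 0" and E: "E \<subseteq> {..<m}" and D: "D \<subseteq> {..<m}"
  shows "cnt m (rot m a D) E = cnt m D E"
proof -
  let ?c = "m - a mod m"
  have c: "?c \<le> m" by simp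
  have bk: "rot m ?c (rot m a D) = D"
  proof -
    have "rot m ?c (rot m a D) = rot m (?c + a) D" by (simp add: rot_rot)
    also have "\<dots> = rot m ((?c + a) mod m) D" by (simp add: rot_mod)
    also have "?c + a = m + a div m * m"
      using div_mult_mod_eq[of a m] mod_less_divisor[OF m, of a] by linarith
    then have "(?c + a) mod m = 0" by simp
    finally show ?thesis using rot_0[OF D] by simp
  qed
  have "rot m t E \<subseteq> rot m a D \<longleftrightarrow> rot m t (rot m ?c E) \<subseteq> D" for t
  proof -
    have "rot m t E \<subseteq> rot m a D \<longleftrightarrow> rot m ?c (rot m t E) \<subseteq> rot m ?c (rot m a D)"
      by (rule rot_subset_iff[symmetric]) (use rot_sub[OF m] in auto)
    also have "rot m ?c (rot m t E) = rot m t (rot m ?c E)" by (simp add: rot_rot add.commute)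
    finally show ?thesis using bk by simp
  qed
  then have "cnt m (rot m a D) E = cnt m D (rot m ?c E)" unfolding cnt_def by simp
  also have "\<dots> = cnt m D E" by (rule cnt_rot[OF m E D])
  finally show ?thesis .
qed

lemma rot_sub_iff: "rot m t K \<subseteq> D \<longleftrightarrow> (\<forall>k\<in>K. (k + t) mod m \<in> D)"
  unfolding rot_def by auto

lemma mod_if2: "(a::nat) < 2 * m \<Longrightarrow> a mod m = (if a < m then a else a - m)"
  by (simp add: le_mod_geq)

definition "TT m D K = {t. t < m \<and> rot m t K \<subseteq> D}"

context
  fixes h m :: nat and D1 :: "nat set"
  assumes h3: "h \<ge> 3" and mdef: "m = 2 * h + 1" and D1def: "D1 = {..<h} \<union> {h+1}"
begin

lemma cnt_TT: "cnt m D1 K = card (TT m D1 K)" unfolding cnt_def TT_def by simp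

lemma memTT: "t \<in> TT m D1 K \<longleftrightarrow> t < m \<and> (\<forall>k\<in>K. (k + t) mod m < h \<or> (k + t) mod m = h + 1)"
  unfolding TT_def rot_sub_iff D1def by auto

lemma D1m: "D1 \<subseteq> {..<m}" using mdef D1def h3 by auto

lemma TT_R2:
  assumes K: "K \<subseteq> D1" "0 \<notin> K" "1 \<in> K" "h+1 \<in> K" "K \<noteq> {1, h+1}"
  shows "TT m D1 K = {0}"
proof
  have "rot m 0 K = K" using K(1) D1m by (intro rot_0) auto
  then show "{0} \<subseteq> TT m D1 K" using K mdef unfolding TT_def by auto
  show "TT m D1 K \<subseteq> {0}"
  proof
    fix t assume t: "t \<in> TT m D1 K"
    then have tm: "t < m" and all: "\<forall>k\<in>K. (k + t) mod m < h \<or> (k + t) mod m = h + 1"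
      by (auto simp: memTT)
    have a1: "(1 + t) mod m < h \<or> (1 + t) mod m = h + 1" using all K by auto
    have a2: "(h + 1 + t) mod m < h \<or> (h + 1 + t) mod m = h + 1" using all K by auto
    have e1: "(1 + t) mod m = (if 1 + t < m then 1 + t else 1 + t - m)"
      by (rule mod_if2) (use tm mdef in auto)
    have e2: "(h + 1 + t) mod m = (if h + 1 + t < m then h + 1 + t else h + 1 + t - m)"
      by (rule mod_if2) (use tm mdef in auto)
    have "t = 0 \<or> t = h"
      using a1 a2 e1 e2 tm mdef h3 by (auto split: if_splits)
    moreover have "t \<noteq> h"
    proof
      assume th: "t = h"
      obtain k where k: "k \<in> K" "k \<noteq> 1" "k \<noteq> h + 1"
      proof -
        have "\<not> K \<subseteq> {1, h+1}" using K by blast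
        then show ?thesis using that by blast
      qed
      have "k < h" "k \<noteq> 0" using k K D1def by auto
      then have "(k + t) mod m = k + h" using th mdef by simp
      then show False using all k th \<open>k < h\<close> \<open>k \<noteq> 0\<close> by force
    qed
    ultimately show "t \<in> {0}" by simp
  qed
qed

lemma TT_R1z:
  assumes K: "K \<subseteq> D1" "0 \<in> K" "h+1 \<in> K" "K \<noteq> {0, h+1}"
  shows "TT m D1 K = {0}"
proof
  have "rot m 0 K = K" using K(1) D1m by (intro rot_0) auto
  then show "{0} \<subseteq> TT m D1 K" using K mdef unfolding TT_def by auto
  show "TT m D1 K \<subseteq> {0}"
  proof
    fix t assume t: "t \<in> TT m D1 K"
    then have tm: "t < m" and all: "\<forall>k\<in>K. (k + t) mod m < h \<or> (k + t) mod m = h + 1"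
      by (auto simp: memTT)
    have a1: "t mod m < h \<or> t mod m = h + 1" using all K by force
    have a2: "(h + 1 + t) mod m < h \<or> (h + 1 + t) mod m = h + 1" using all K by auto
    have e2: "(h + 1 + t) mod m = (if h + 1 + t < m then h + 1 + t else h + 1 + t - m)"
      by (rule mod_if2) (use tm mdef in auto)
    have "t = 0 \<or> t = h + 1"
      using a1 a2 e2 tm mdef h3 by (auto split: if_splits)
    moreover have "t \<noteq> h + 1"
    proof
      assume th: "t = h + 1"
      obtain k where k: "k \<in> K" "k \<noteq> 0" "k \<noteq> h + 1"
      proof -
        have "\<not> K \<subseteq> {0, h+1}" using K by blast
        then show ?thesis using that by blast
      qed
      have "k < h" using k K D1def by auto
      then have "(k + t) mod m = k + h + 1" using th mdef by simp
      then show False using all k th \<open>k < h\<close> by force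
    qed
    ultimately show "t \<in> {0}" by simp
  qed
qed

lemma TT_pair0: "TT m D1 {0, h+1} = {0, h+1}"
proof -
  have "h + 1 + (h + 1) = m + 1" using mdef by simp
  then have "(h + 1 + (h + 1)) mod m = (m + 1) mod m" by simp
  also have "\<dots> = 1 mod m" by (simp only: mod_add_self1)
  also have "\<dots> = 1" using mdef h3 by simp
  finally have "(h + 1 + (h + 1)) mod m = 1" .
  then have "h + 1 \<in> TT m D1 {0, h+1}" unfolding memTT using mdef h3 by simp
  moreover have "TT m D1 {0, h+1} \<subseteq> {0, h+1}"
  proof
    fix t assume t: "t \<in> TT m D1 {0, h+1}"
    then have tm: "t < m" and all: "\<forall>k\<in>{0,h+1}. (k + t) mod m < h \<or> (k + t) mod m = h + 1"
      by (auto simp: memTT)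
    have a1: "t mod m < h \<or> t mod m = h + 1" using all by force
    have a2: "(h + 1 + t) mod m < h \<or> (h + 1 + t) mod m = h + 1" using all by auto
    have e2: "(h + 1 + t) mod m = (if h + 1 + t < m then h + 1 + t else h + 1 + t - m)"
      by (rule mod_if2) (use tm mdef in auto)
    show "t \<in> {0, h+1}"
      using a1 a2 e2 tm mdef h3 by (auto split: if_splits)
  qed
  moreover have "0 \<in> TT m D1 {0, h+1}" unfolding memTT using mdef h3 by simp
  ultimately show ?thesis by blast
qed

lemma TT_pair1: "TT m D1 {1, h+1} = {0, h}"
proof -
  have "h + 1 + h = m" using mdef by simp
  then have "(h + 1 + h) mod m = 0" by simp
  then have "h \<in> TT m D1 {1, h+1}" unfolding memTT using mdef h3 by simp
  moreover have "TT m D1 {1, h+1} \<subseteq> {0, h}"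
  proof
    fix t assume t: "t \<in> TT m D1 {1, h+1}"
    then have tm: "t < m" and all: "\<forall>k\<in>{1,h+1}. (k + t) mod m < h \<or> (k + t) mod m = h + 1"
      by (auto simp: memTT)
    have a1: "(1 + t) mod m < h \<or> (1 + t) mod m = h + 1" using all by force
    have a2: "(h + 1 + t) mod m < h \<or> (h + 1 + t) mod m = h + 1" using all by auto
    have e1: "(1 + t) mod m = (if 1 + t < m then 1 + t else 1 + t - m)"
      by (rule mod_if2) (use tm mdef in auto)
    have e2: "(h + 1 + t) mod m = (if h + 1 + t < m then h + 1 + t else h + 1 + t - m)"
      by (rule mod_if2) (use tm mdef in auto)
    show "t \<in> {0, h}"
      using a1 a2 e1 e2 tm mdef h3 by (auto split: if_splits)
  qed
  moreover have "0 \<in> TT m D1 {1, h+1}" unfolding memTT using mdef h3 by simp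
  ultimately show ?thesis by blast
qed

lemma TT_single: "TT m D1 {0} = D1"
proof -
  have "TT m D1 {0} = {t. t < m \<and> t mod m \<in> D1}" unfolding TT_def rot_sub_iff by simp
  also have "\<dots> = D1" using D1m by auto
  finally show ?thesis .
qed

lemma TT_R1a:
  assumes K: "K \<subseteq> {..<h}" "0 \<in> K" "Max K \<ge> 1"
  shows "TT m D1 K = {..h - 1 - Max K} \<union> (if Max K - 1 \<notin> K then {h + 1 - Max K} else {})"
proof -
  let ?M = "Max K"
  have fin: "finite K" using K(1) finite_subset by blast
  have MK: "?M \<in> K" using fin K(2) Max_in by blast
  have Mh: "?M < h" using MK K(1) by auto
  have leM: "k \<le> ?M" if "k \<in> K" for k using fin that by simp
  show ?thesis
  proof (intro equalityI subsetI)
    fix t assume t: "t \<in> TT m D1 K"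
    then have tm: "t < m" and all: "\<forall>k\<in>K. (k + t) mod m < h \<or> (k + t) mod m = h + 1"
      by (auto simp: memTT)
    have a1: "t mod m < h \<or> t mod m = h + 1" using all K by force
    have a2: "(?M + t) mod m < h \<or> (?M + t) mod m = h + 1" using all MK by auto
    have e2: "(?M + t) mod m = (if ?M + t < m then ?M + t else ?M + t - m)"
      by (rule mod_if2) (use tm mdef Mh in auto)
    have tl: "t < h" using a1 a2 e2 tm mdef Mh K(3) by (auto split: if_splits)
    have "t \<le> h - 1 - ?M \<or> (t = h + 1 - ?M)" using a2 tl Mh mdef by auto
    moreover have "?M - 1 \<notin> K" if "t = h + 1 - ?M"
    proof
      assume "?M - 1 \<in> K"
      then have "(?M - 1 + t) mod m < h \<or> (?M - 1 + t) mod m = h + 1" using all by auto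
      moreover have "?M - 1 + t = h" using that K(3) Mh by auto
      ultimately show False using mdef by simp
    qed
    ultimately show "t \<in> {..h - 1 - ?M} \<union> (if ?M - 1 \<notin> K then {h + 1 - ?M} else {})"
      by auto
  next
    fix t assume t: "t \<in> {..h - 1 - ?M} \<union> (if ?M - 1 \<notin> K then {h + 1 - ?M} else {})"
    show "t \<in> TT m D1 K"
    proof (cases "t \<le> h - 1 - ?M")
      case True
      have "\<forall>k\<in>K. (k + t) mod m < h"
      proof
        fix k assume "k \<in> K"
        then have "k + t < h" using leM True Mh by fastforce
        then show "(k + t) mod m < h" using mdef by simp
      qed
      then show ?thesis unfolding memTT using True Mh mdef by auto
    next
      case False
      then have tt: "t = h + 1 - ?M" and nK: "?M - 1 \<notin> K" using t by (auto split: if_splits)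
      have "\<forall>k\<in>K. (k + t) mod m < h \<or> (k + t) mod m = h + 1"
      proof
        fix k assume kK: "k \<in> K"
        show "(k + t) mod m < h \<or> (k + t) mod m = h + 1"
        proof (cases "k = ?M")
          case True then show ?thesis using tt Mh K(3) mdef by simp
        next
          case False
          then have "k \<le> ?M - 2" using leM[OF kK] nK kK by (cases "k = ?M - 1") auto
          moreover have "?M \<ge> 2" using nK K(2) K(3) by (cases "?M = 1") auto
          ultimately have "k + t < h" using tt Mh by linarith
          then show ?thesis using mdef by simp
        qed
      qed
      then show ?thesis unfolding memTT using tt Mh mdef by auto
    qed
  qed
qed

end


definition "RR h D1 K \<longleftrightarrow> K \<subseteq> D1 \<and> (0 \<in> K \<or> (1 \<in> K \<and> h + 1 \<in> K)) \<and> K \<noteq> {1, h+1}"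

context
  fixes h m :: nat and D1 :: "nat set"
  assumes h3: "h \<ge> 3" and mdef: "m = 2 * h + 1" and D1def: "D1 = {..<h} \<union> {h+1}"
begin


lemma rot_mem: "k \<in> K \<Longrightarrow> (k + p) mod m \<in> rot m p K" unfolding rot_def by auto

lemma rot_memE: "x \<in> rot m p K \<Longrightarrow> \<exists>k\<in>K. x = (k + p) mod m" unfolding rot_def by auto

lemma D1mem: "x \<in> D1 \<longleftrightarrow> x < h \<or> x = h + 1" using D1def by auto

lemma inj_case2:
  assumes K: "RR h D1 K" "0 \<in> K" and K': "RR h D1 K'" "0 \<notin> K'" and p: "p < m" and eq: "rot m p K = K'"
  shows False
proof -
  have K'1: "1 \<in> K'" "h + 1 \<in> K'" "K' \<subseteq> D1" using K' unfolding RR_def by auto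
  have KD: "K \<subseteq> D1" using K unfolding RR_def by auto
  have "p \<in> K'" using rot_mem[OF K(2), of p] eq p by simp
  then have pD: "p < h \<or> p = h + 1" using K'1 D1mem by auto
  obtain k1 where k1: "k1 \<in> K" "(k1 + p) mod m = 1" using rot_memE[of 1 p K] eq K'1 by auto
  obtain kh where kh: "kh \<in> K" "(kh + p) mod m = h + 1" using rot_memE[of "h+1" p K] eq K'1 by auto
  have k1D: "k1 < h \<or> k1 = h + 1" using k1 KD D1mem by auto
  have khD: "kh < h \<or> kh = h + 1" using kh KD D1mem by auto
  have e1: "(k1 + p) mod m = (if k1 + p < m then k1 + p else k1 + p - m)"
    by (rule mod_if2) (use k1D p mdef in auto)
  have e2: "(kh + p) mod m = (if kh + p < m then kh + p else kh + p - m)"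
    by (rule mod_if2) (use khD p mdef in auto)
  show False
  proof (cases "p = h + 1")
    case True
    have "\<not> K' \<subseteq> {1, h+1}" using K' unfolding RR_def by auto
    then obtain k' where k': "k' \<in> K'" "k' \<noteq> 1" "k' \<noteq> h + 1" by blast
    obtain k where k: "k \<in> K" "k' = (k + p) mod m" using rot_memE[of k' p K] eq k' by auto
    have kD: "k < h \<or> k = h + 1" using k KD D1mem by auto
    have k'D: "k' < h" using k' K'1 D1mem by auto
    have e: "(k + p) mod m = (if k + p < m then k + p else k + p - m)"
      by (rule mod_if2) (use kD p mdef in auto)
    show False using e k kD k'D k' True mdef by (auto split: if_splits)
  next
    case False
    then have "p < h" using pD by simp
    moreover have "p \<noteq> 0" using \<open>p \<in> K'\<close> K'(2) by metis
    ultimately show False using e1 e2 k1 kh k1D khD mdef h3 by (auto split: if_splits)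
  qed
qed

lemma inj_core:
  assumes K: "RR h D1 K" and K': "RR h D1 K'" and p: "p < m" and eq: "rot m p K = K'"
  shows "p = 0"
proof (rule ccontr)
  assume p0: "p \<noteq> 0"
  have KD: "K \<subseteq> D1" and K'D: "K' \<subseteq> D1" using K K' unfolding RR_def by auto
  have Km: "K \<subseteq> {..<m}" "K' \<subseteq> {..<m}" using KD K'D D1m[OF h3 mdef D1def] by auto
  have eq': "rot m (m - p) K' = K" using eq rot_inv[OF Km(1), of p] p by simp
  show False
  proof (cases "0 \<in> K")
    case True
    show False
    proof (cases "0 \<in> K'")
      case True': True
      have "p \<in> K'" using rot_mem[OF True, of p] eq p by simp
      then have pD: "p < h \<or> p = h + 1" using K'D D1mem by auto
      obtain k where k: "k \<in> K" "(k + p) mod m = 0" using rot_memE[of 0 p K] eq True' by auto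
      have kD: "k < h \<or> k = h + 1" using k KD D1mem by auto
      have e: "(k + p) mod m = (if k + p < m then k + p else k + p - m)"
        by (rule mod_if2) (use kD p mdef in auto)
      show False using e k kD pD p0 mdef by (auto split: if_splits)
    next
      case False
      then show False using inj_case2[OF K True K' False p eq] by simp
    qed
  next
    case False
    show False
    proof (cases "0 \<in> K'")
      case True
      have "m - p < m" using p0 p by simp
      then show False using inj_case2[OF K' True K False _ eq'] by simp
    next
      case False': False
      have K1: "1 \<in> K" "h + 1 \<in> K" using K False unfolding RR_def by auto
      have a1: "(1 + p) mod m \<in> K'" "(h + 1 + p) mod m \<in> K'" using rot_mem[OF K1(1), of p] rot_mem[OF K1(2), of p] eq by auto
      have b0: "(1 + p) mod m \<noteq> 0" "(h + 1 + p) mod m \<noteq> 0"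
        using a1 False' by metis+
      have b: "(1 + p) mod m < h \<or> (1 + p) mod m = h + 1" "(h + 1 + p) mod m < h \<or> (h + 1 + p) mod m = h + 1"
        using a1 K'D D1mem by auto
      have e1: "(1 + p) mod m = (if 1 + p < m then 1 + p else 1 + p - m)"
        by (rule mod_if2) (use p mdef in auto)
      have e2: "(h + 1 + p) mod m = (if h + 1 + p < m then h + 1 + p else h + 1 + p - m)"
        by (rule mod_if2) (use p mdef in auto)
      show False using b b0 e1 e2 p p0 mdef h3 by (auto split: if_splits)
    qed
  qed
qed

end


context
  fixes h m :: nat and D1 :: "nat set"
  assumes h3: "h \<ge> 3" and mdef: "m = 2 * h + 1" and D1def: "D1 = {..<h} \<union> {h+1}"
begin

lemma normalize:
  assumes K0: "K0 \<subseteq> D1" "K0 \<noteq> {}"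
  shows "\<exists>u<m. rot m u K0 \<subseteq> D1 \<and> (0 \<in> rot m u K0 \<or> (1 \<in> rot m u K0 \<and> h + 1 \<in> rot m u K0))"
proof -
  have Km: "K0 \<subseteq> {..<m}" using K0 D1m[OF h3 mdef D1def] by auto
  have fin: "finite K0" using Km finite_subset by blast
  show ?thesis
  proof (cases "0 \<in> K0")
    case True then show ?thesis using rot_0[OF Km] K0 mdef by (intro exI[of _ 0]) auto
  next
    case n0: False
    show ?thesis
    proof (cases "K0 = {h+1}")
      case True
      have "h + 1 + h = m" using mdef by simp
      then have "rot m h K0 = {0}" using True unfolding rot_def by simp
      then show ?thesis using mdef D1def h3 by (intro exI[of _ h]) auto
    next
      case False
      let ?a = "Min K0"
      have aK: "?a \<in> K0" using fin K0 Min_in by blast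
      have ale: "?a \<le> k" if "k \<in> K0" for k using fin that by simp
      have ah: "?a < h"
      proof (rule ccontr)
        assume "\<not> ?a < h"
        then have "?a = h + 1" using aK K0 D1def by auto
        then have "\<forall>k\<in>K0. k = h + 1" using ale K0 D1def by force
        then have "K0 \<subseteq> {h+1}" by blast
        then show False using False K0 by (metis subset_singletonD)
      qed
      have a0: "?a \<noteq> 0" using aK n0 by metis
      show ?thesis
      proof (cases "?a = 1 \<and> h + 1 \<in> K0")
        case True then show ?thesis using rot_0[OF Km] K0 aK mdef by (intro exI[of _ 0]) auto
      next
        case False
        have img: "rot m (m - ?a) K0 = (\<lambda>k. k - ?a) ` K0"
          unfolding rot_def
        proof (rule image_cong[OF refl])
          fix k assume k: "k \<in> K0"
          have "k < m" using k Km by auto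
          have "k + (m - ?a) = m + (k - ?a)" using ale[OF k] ah mdef by simp
          moreover have "(m + (k - ?a)) mod m = k - ?a" using \<open>k < m\<close> by (simp only: mod_add_self1) simp
          ultimately show "(k + (m - ?a)) mod m = k - ?a" by simp
        qed
        have "(\<lambda>k. k - ?a) ` K0 \<subseteq> D1"
        proof
          fix x assume "x \<in> (\<lambda>k. k - ?a) ` K0"
          then obtain k where k: "k \<in> K0" "x = k - ?a" by auto
          have "k < h \<or> k = h + 1" using k K0 D1def by auto
          then show "x \<in> D1"
          proof
            assume "k < h" then show ?thesis using k D1def by auto
          next
            assume kh: "k = h + 1"
            then have "?a \<noteq> 1" using False k by auto
            then have "?a \<ge> 2" using a0 by linarith
            then have "x < h" using k kh ah by linarith
            then show ?thesis using D1def by auto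
          qed
        qed
        moreover have "0 \<in> (\<lambda>k. k - ?a) ` K0" using aK by force
        moreover have "m - ?a < m" using a0 ah mdef by simp
        ultimately show ?thesis using img by (intro exI[of _ "m - ?a"]) auto
      qed
    qed
  qed
qed

lemma rot_back: "m > 0 \<Longrightarrow> E \<subseteq> {..<m} \<Longrightarrow> \<exists>c<m. rot m c (rot m s E) = E"
proof -
  assume m: "m > 0" and E: "E \<subseteq> {..<m}"
  let ?c = "(m - s mod m) mod m"
  have "rot m ?c (rot m s E) = rot m (?c + s) E" by (simp add: rot_rot)
  also have "\<dots> = rot m ((m - s mod m) + s) E" by (simp add: rot_mod_add)
  also have "\<dots> = rot m ((m - s mod m) + s mod m) E"
    by (rule rot_cong) (simp add: mod_add_right_eq)
  also have "(m - s mod m) + s mod m = m" using mod_less_divisor[OF m, of s] by linarith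
  finally show ?thesis using rot_m[OF E] m by (intro exI[of _ ?c]) auto
qed

lemma cnt_pair1: "cnt m D1 {1, h+1} = 2"
  using TT_pair1[OF h3 mdef D1def] h3 unfolding cnt_TT[OF h3 mdef D1def] by simp

lemma Rm: "RR h D1 K \<Longrightarrow> K \<subseteq> {..<m}"
  using D1m[OF h3 mdef D1def] unfolding RR_def by auto

lemma odd_image:
  "{E. E \<subseteq> {..<m} \<and> E \<noteq> {} \<and> odd (cnt m D1 E)}
     = (\<lambda>(t,K). rot m t K) ` ({..<m} \<times> {K. RR h D1 K \<and> odd (cnt m D1 K)})"
proof (intro equalityI subsetI)
  have m: "m > 0" using mdef by simp
  fix E assume "E \<in> {E. E \<subseteq> {..<m} \<and> E \<noteq> {} \<and> odd (cnt m D1 E)}"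
  then have E: "E \<subseteq> {..<m}" "E \<noteq> {}" "odd (cnt m D1 E)" by auto
  then have "cnt m D1 E \<noteq> 0" by (metis even_zero)
  then obtain t0 where t0: "t0 < m" "rot m t0 E \<subseteq> D1"
    unfolding cnt_def by (metis (mono_tags, lifting) Collect_empty_eq card.empty)
  have ne: "rot m t0 E \<noteq> {}" using E(2) rot_empty_iff by metis
  obtain u where u: "u < m" "rot m u (rot m t0 E) \<subseteq> D1"
    "0 \<in> rot m u (rot m t0 E) \<or> (1 \<in> rot m u (rot m t0 E) \<and> h + 1 \<in> rot m u (rot m t0 E))"
    using normalize[OF t0(2) ne] by blast
  define K where "K = rot m u (rot m t0 E)"
  have cK: "cnt m D1 K = cnt m D1 E"
    unfolding K_def using cnt_rot[OF m _ D1m[OF h3 mdef D1def]] E(1) rot_sub[OF m] by metis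
  have "K \<noteq> {1, h+1}" using cK E(3) cnt_pair1 by auto
  then have RK: "RR h D1 K" using u unfolding RR_def K_def by auto
  have "K = rot m (u + t0) E" unfolding K_def by (simp add: rot_rot)
  then obtain c where c: "c < m" "rot m c K = E" using rot_back[OF m E(1)] by metis
  show "E \<in> (\<lambda>(t,K). rot m t K) ` ({..<m} \<times> {K. RR h D1 K \<and> odd (cnt m D1 K)})"
    using c RK cK E(3) by (intro image_eqI[of _ _ "(c, K)"]) auto
next
  have m: "m > 0" using mdef by simp
  fix E assume "E \<in> (\<lambda>(t,K). rot m t K) ` ({..<m} \<times> {K. RR h D1 K \<and> odd (cnt m D1 K)})"
  then obtain t K where tK: "t < m" "RR h D1 K" "odd (cnt m D1 K)" "E = rot m t K" by auto
  have "K \<noteq> {}" using tK(2) unfolding RR_def by auto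
  then have "E \<noteq> {}" using tK(4) rot_empty_iff by metis
  moreover have "cnt m D1 E = cnt m D1 K" using tK cnt_rot[OF m Rm[OF tK(2)] D1m[OF h3 mdef D1def]] by simp
  ultimately show "E \<in> {E. E \<subseteq> {..<m} \<and> E \<noteq> {} \<and> odd (cnt m D1 E)}"
    using tK rot_sub[OF m] by auto
qed

lemma odd_inj: "inj_on (\<lambda>(t,K). rot m t K) ({..<m} \<times> {K. RR h D1 K \<and> odd (cnt m D1 K)})"
proof (rule inj_onI, clarify)
  fix t K t' K'
  assume t: "t < m" "t' < m" and K: "RR h D1 K" "RR h D1 K'" and eq: "rot m t K = rot m t' K'"
  have m: "m > 0" using mdef by simp
  let ?p = "(m - t + t') mod m"
  have "K = rot m (m - t) (rot m t K)" using rot_inv[OF Rm[OF K(1)], of t] t by simp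
  also have "\<dots> = rot m (m - t + t') K'" using eq by (simp add: rot_rot)
  also have "\<dots> = rot m ?p K'" by (simp add: rot_mod)
  finally have "rot m ?p K' = K" by simp
  then have p0: "?p = 0" using inj_core[OF h3 mdef D1def K(2) K(1) _] m by simp
  have "m - t + t' = m"
  proof -
    have "m - t + t' < 2 * m" using t by auto
    then have e: "?p = (if m - t + t' < m then m - t + t' else m - t + t' - m)" by (rule mod_if2)
    show ?thesis
    proof (cases "m - t + t' < m")
      case True then show ?thesis using e p0 t by simp
    next
      case False then show ?thesis using e p0 t by simp
    qed
  qed
  then show "t = t' \<and> K = K'"
    using p0 \<open>rot m ?p K' = K\<close> rot_0[OF Rm[OF K(2)]] t by auto
qed

lemma card_odd: "card {E. E \<subseteq> {..<m} \<and> E \<noteq> {} \<and> odd (cnt m D1 E)}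
    = m * card {K. RR h D1 K \<and> odd (cnt m D1 K)}"
  unfolding odd_image by (simp add: card_image[OF odd_inj] card_cartesian_product)

end


lemma card_ins2:
  assumes "finite X" "a \<notin> X" "b \<notin> X"
  shows "card ((\<lambda>B. insert a (insert b B)) ` (Pow X - {{}})) = 2 ^ card X - 1"
proof -
  have "inj_on (\<lambda>B. insert a (insert b B)) (Pow X - {{}})"
  proof (rule inj_onI)
    fix B C assume "B \<in> Pow X - {{}}" "C \<in> Pow X - {{}}" "insert a (insert b B) = insert a (insert b C)"
    then have "insert a (insert b B) - {a, b} = insert a (insert b C) - {a, b}" by simp
    moreover have "insert a (insert b B) - {a, b} = B" "insert a (insert b C) - {a, b} = C"
      using \<open>B \<in> Pow X - {{}}\<close> \<open>C \<in> Pow X - {{}}\<close> assms by auto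
    ultimately show "B = C" by simp
  qed
  then show ?thesis using assms by (simp add: card_image card_Pow card_Diff_singleton)
qed

context
  fixes h m :: nat and D1 :: "nat set"
  assumes h3: "h \<ge> 3" and mdef: "m = 2 * h + 1" and D1def: "D1 = {..<h} \<union> {h+1}"
begin

definition "A1 = {K. K \<subseteq> D1 \<and> 0 \<in> K \<and> h + 1 \<in> K \<and> K \<noteq> {0, h+1}}"
definition "A2 = {K. K \<subseteq> D1 \<and> 0 \<notin> K \<and> 1 \<in> K \<and> h + 1 \<in> K \<and> K \<noteq> {1, h+1}}"
definition "A3 = {K. K \<subseteq> {..<h} \<and> 0 \<in> K \<and> odd (cnt m D1 K)}"

lemma cnt_A1: "K \<in> A1 \<Longrightarrow> cnt m D1 K = 1"
  unfolding A1_def cnt_TT[OF h3 mdef D1def] using TT_R1z[OF h3 mdef D1def] by simp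

lemma cnt_A2: "K \<in> A2 \<Longrightarrow> cnt m D1 K = 1"
  unfolding A2_def cnt_TT[OF h3 mdef D1def] using TT_R2[OF h3 mdef D1def] by simp

lemma cnt_pair0: "cnt m D1 {0, h+1} = 2"
  using TT_pair0[OF h3 mdef D1def] h3 unfolding cnt_TT[OF h3 mdef D1def] by simp

lemma Rodd_split: "{K. RR h D1 K \<and> odd (cnt m D1 K)} = A1 \<union> A2 \<union> A3"
proof (intro equalityI subsetI)
  fix K assume "K \<in> {K. RR h D1 K \<and> odd (cnt m D1 K)}"
  then have R: "K \<subseteq> D1" "0 \<in> K \<or> (1 \<in> K \<and> h + 1 \<in> K)" "K \<noteq> {1, h+1}" "odd (cnt m D1 K)"
    unfolding RR_def by auto
  show "K \<in> A1 \<union> A2 \<union> A3"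
  proof (cases "0 \<in> K")
    case True
    show ?thesis
    proof (cases "h + 1 \<in> K")
      case True': True
      have "K \<noteq> {0, h+1}" using R(4) cnt_pair0 by auto
      then show ?thesis using R True True' unfolding A1_def by auto
    next
      case False
      then have "K \<subseteq> {..<h}" using R(1) D1def by auto
      then show ?thesis using R True unfolding A3_def by auto
    qed
  next
    case False
    then show ?thesis using R unfolding A2_def by auto
  qed
next
  fix K assume K: "K \<in> A1 \<union> A2 \<union> A3"
  then show "K \<in> {K. RR h D1 K \<and> odd (cnt m D1 K)}"
  proof (elim UnE)
    assume "K \<in> A1" then show ?thesis using cnt_A1 unfolding A1_def RR_def by auto
  next
    assume "K \<in> A2" then show ?thesis using cnt_A2 unfolding A2_def RR_def by auto
  next
    assume "K \<in> A3" then show ?thesis unfolding A3_def RR_def using D1def h3 by auto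
  qed
qed

lemma card_A1: "card A1 = 2 ^ (h - 1) - 1"
proof -
  have "A1 = (\<lambda>B. insert 0 (insert (h+1) B)) ` (Pow {1..<h} - {{}})"
  proof (intro equalityI subsetI)
    fix K assume K: "K \<in> A1"
    have "K - {0, h+1} \<subseteq> {1..<h}"
    proof
      fix x assume x: "x \<in> K - {0, h+1}"
      then have "x < h" "x \<noteq> 0" using K D1def unfolding A1_def by auto
      then show "x \<in> {1..<h}" by auto
    qed
    moreover have "K - {0, h+1} \<noteq> {}" using K unfolding A1_def by auto
    ultimately have "K - {0, h+1} \<in> Pow {1..<h} - {{}}" by auto
    moreover have "K = insert 0 (insert (h+1) (K - {0, h+1}))" using K unfolding A1_def by auto
    ultimately show "K \<in> (\<lambda>B. insert 0 (insert (h+1) B)) ` (Pow {1..<h} - {{}})" by blast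
  next
    fix K assume "K \<in> (\<lambda>B. insert 0 (insert (h+1) B)) ` (Pow {1..<h} - {{}})"
    then obtain B where B: "B \<subseteq> {1..<h}" "B \<noteq> {}" "K = insert 0 (insert (h+1) B)" by auto
    have "K \<noteq> {0, h+1}"
    proof
      assume "K = {0, h+1}"
      then have sub: "B \<subseteq> {0, h+1}" using B(3) by blast
      obtain x where "x \<in> B" using B by auto
      then have "x \<in> {0, h+1}" "x \<in> {1..<h}" using sub B by auto
      then show False by auto
    qed
    then show "K \<in> A1" unfolding A1_def using B h3 D1def by auto
  qed
  then show ?thesis using card_ins2[of "{1..<h}" 0 "h+1"] by simp
qed

lemma card_A2: "card A2 = 2 ^ (h - 2) - 1"
proof -
  have "A2 = (\<lambda>B. insert 1 (insert (h+1) B)) ` (Pow {2..<h} - {{}})"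
  proof (intro equalityI subsetI)
    fix K assume K: "K \<in> A2"
    have "K - {1, h+1} \<subseteq> {2..<h}"
    proof
      fix x assume x: "x \<in> K - {1, h+1}"
      then have "x < h" "x \<noteq> 0" "x \<noteq> 1" using K D1def unfolding A2_def by auto
      then show "x \<in> {2..<h}" by auto
    qed
    moreover have "K - {1, h+1} \<noteq> {}" using K unfolding A2_def by auto
    ultimately have "K - {1, h+1} \<in> Pow {2..<h} - {{}}" by auto
    moreover have "K = insert 1 (insert (h+1) (K - {1, h+1}))" using K unfolding A2_def by auto
    ultimately show "K \<in> (\<lambda>B. insert 1 (insert (h+1) B)) ` (Pow {2..<h} - {{}})" by blast
  next
    fix K assume "K \<in> (\<lambda>B. insert 1 (insert (h+1) B)) ` (Pow {2..<h} - {{}})"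
    then obtain B where B: "B \<subseteq> {2..<h}" "B \<noteq> {}" "K = insert 1 (insert (h+1) B)" by auto
    have "K \<noteq> {1, h+1}"
    proof
      assume "K = {1, h+1}"
      then have sub: "B \<subseteq> {1, h+1}" using B by auto
      obtain x where "x \<in> B" using B by auto
      then have "x \<in> {1, h+1}" "x \<in> {2..<h}" using sub B by auto
      then show False by auto
    qed
    then show "K \<in> A2" unfolding A2_def using B h3 D1def by auto
  qed
  then show ?thesis using card_ins2[of "{2..<h}" 1 "h+1"] by simp
qed

end


definition tg :: "nat set \<Rightarrow> nat set" where
  "tg K = (if Max K - 1 \<in> K then K - {Max K - 1} else insert (Max K - 1) K)"

context
  fixes h m :: nat and D1 :: "nat set"
  assumes h3: "h \<ge> 3" and mdef: "m = 2 * h + 1" and D1def: "D1 = {..<h} \<union> {h+1}"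
begin

lemma cnt_Q:
  assumes K: "K \<subseteq> {..<h}" "0 \<in> K" "Max K \<ge> 1"
  shows "cnt m D1 K = h - Max K + (if Max K - 1 \<notin> K then 1 else 0)"
proof -
  have fin: "finite K" using K(1) finite_subset by blast
  have Mh: "Max K < h" using K fin Max_in by blast
  have "cnt m D1 K = card ({..h - 1 - Max K} \<union> (if Max K - 1 \<notin> K then {h + 1 - Max K} else {}))"
    unfolding cnt_TT[OF h3 mdef D1def] TT_R1a[OF h3 mdef D1def K] ..
  also have "\<dots> = h - Max K + (if Max K - 1 \<notin> K then 1 else 0)"
    using Mh by (auto simp: card_insert_if)
  finally show ?thesis .
qed

lemma tg_props:
  assumes K: "K \<subseteq> {..<h}" "0 \<in> K" "Max K \<ge> 2"
  shows "tg K \<subseteq> {..<h}" "0 \<in> tg K" "Max (tg K) = Max K" "tg (tg K) = K"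
    "(Max K - 1 \<in> tg K) \<longleftrightarrow> Max K - 1 \<notin> K"
proof -
  have fin: "finite K" using K(1) finite_subset by blast
  have MK: "Max K \<in> K" using K fin Max_in by blast
  have Mh: "Max K < h" using MK K by auto
  have le: "k \<le> Max K" if "k \<in> K" for k using fin that by simp
  show s: "tg K \<subseteq> {..<h}" using K Mh unfolding tg_def by auto
  show z: "0 \<in> tg K" using K unfolding tg_def by auto
  have fin2: "finite (tg K)" using s finite_subset by blast
  show M: "Max (tg K) = Max K"
  proof (rule Max_eqI[OF fin2])
    show "Max K \<in> tg K" using MK K(3) unfolding tg_def by auto
    fix y assume "y \<in> tg K" then show "y \<le> Max K" using le unfolding tg_def by (auto split: if_splits)
  qed
  show "(Max K - 1 \<in> tg K) \<longleftrightarrow> Max K - 1 \<notin> K" unfolding tg_def by auto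
  show "tg (tg K) = K"
    using M unfolding tg_def[of "tg K"] by (auto simp: tg_def split: if_splits)
qed

lemma card_A3: "card (A3 h m D1) = (if even h then 2 else 0) + 2 ^ (h - 2) - 1"
proof -
  define Q where "Q = {K. K \<subseteq> {..<h} \<and> 0 \<in> K}"
  define Q2 where "Q2 = {K \<in> Q. Max K \<ge> 2}"
  have finQ: "finite Q" unfolding Q_def by (rule finite_subset[of _ "Pow {..<h}"]) auto
  have cardQ: "card Q = 2 ^ (h - 1)"
  proof -
    have "Q = insert 0 ` Pow {1..<h}"
    proof (intro equalityI subsetI)
      fix K assume K: "K \<in> Q"
      then have "K - {0} \<in> Pow {1..<h}" unfolding Q_def by auto
      moreover have "K = insert 0 (K - {0})" using K unfolding Q_def by auto
      ultimately show "K \<in> insert 0 ` Pow {1..<h}" by blast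
    qed (use h3 in \<open>auto simp: Q_def\<close>)
    moreover have "inj_on (insert 0) (Pow {1..<h})"
    proof (rule inj_onI)
      fix B C assume "B \<in> Pow {1..<h}" "C \<in> Pow {1..<h}" "insert 0 B = insert 0 C"
      then show "B = C" by (metis Diff_insert_absorb PowD atLeastLessThan_iff not_one_le_zero subsetD)
    qed
    ultimately show ?thesis by (simp add: card_image card_Pow)
  qed
  have Qsplit: "Q = {{0}, {0,1}} \<union> Q2"
  proof (intro equalityI subsetI)
    fix K assume K: "K \<in> Q"
    show "K \<in> {{0}, {0,1}} \<union> Q2"
    proof (cases "Max K \<ge> 2")
      case True then show ?thesis using K unfolding Q2_def by auto
    next
      case False
      have fin: "finite K" using K unfolding Q_def using finite_subset by blast
      have "\<forall>k\<in>K. k \<le> 1"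
      proof
        fix k assume "k \<in> K"
        then have "k \<le> Max K" using fin by simp
        then show "k \<le> 1" using False by linarith
      qed
      then have "K \<subseteq> {0, 1}" by auto
      then show ?thesis using K unfolding Q_def by auto
    qed
  qed (use h3 in \<open>auto simp: Q_def Q2_def\<close>)
  have disj: "{{0}, {0,1}} \<inter> Q2 = {}" unfolding Q2_def by auto
  have cardQ2: "card Q2 = 2 ^ (h - 1) - 2"
  proof -
    have "card Q = card {{0::nat}, {0,1}} + card Q2"
      using Qsplit disj finQ by (metis card_Un_disjoint finite_Un)
    then show ?thesis using cardQ by simp
  qed
  define Qo where "Qo = {K \<in> Q2. odd (cnt m D1 K)}"
  define Qe where "Qe = {K \<in> Q2. even (cnt m D1 K)}"
  have finQ2: "finite Q2" using finQ unfolding Q2_def by simp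
  have cntQ2: "cnt m D1 K = h - Max K + (if Max K - 1 \<notin> K then 1 else 0)" if "K \<in> Q2" for K
    using that cnt_Q unfolding Q2_def Q_def by auto
  have bij: "bij_betw tg Qo Qe"
  proof (rule bij_betw_byWitness[where f'=tg])
    show "\<forall>a\<in>Qo. tg (tg a) = a" using tg_props unfolding Qo_def Q2_def Q_def by auto
    show "\<forall>a\<in>Qe. tg (tg a) = a" using tg_props unfolding Qe_def Q2_def Q_def by auto
    show "tg ` Qo \<subseteq> Qe"
    proof
      fix y assume "y \<in> tg ` Qo"
      then obtain K where K: "K \<in> Qo" "y = tg K" by auto
      have KQ: "K \<subseteq> {..<h}" "0 \<in> K" "Max K \<ge> 2" using K unfolding Qo_def Q2_def Q_def by auto
      note tp = tg_props[OF KQ]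
      have yQ2: "y \<in> Q2" using tp K KQ unfolding Q2_def Q_def by auto
      have "odd (cnt m D1 K)" using K unfolding Qo_def by auto
      moreover have KQ2: "K \<in> Q2" using K unfolding Qo_def by auto
      have "cnt m D1 y + cnt m D1 K = 2 * (h - Max K) + 1"
      proof -
        have My: "Max y = Max K" "(Max K - 1 \<in> y) \<longleftrightarrow> Max K - 1 \<notin> K" using tp K(2) by auto
        show ?thesis unfolding cntQ2[OF yQ2] cntQ2[OF KQ2] My(1)
          using My(2) by (cases "Max K - 1 \<in> K") simp_all
      qed
      ultimately have "even (cnt m D1 y)" by (metis even_add even_mult_iff odd_one even_numeral)
      then show "y \<in> Qe" using yQ2 unfolding Qe_def by auto
    qed
    show "tg ` Qe \<subseteq> Qo"
    proof
      fix y assume "y \<in> tg ` Qe"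
      then obtain K where K: "K \<in> Qe" "y = tg K" by auto
      have KQ: "K \<subseteq> {..<h}" "0 \<in> K" "Max K \<ge> 2" using K unfolding Qe_def Q2_def Q_def by auto
      note tp = tg_props[OF KQ]
      have yQ2: "y \<in> Q2" using tp K KQ unfolding Q2_def Q_def by auto
      have "even (cnt m D1 K)" using K unfolding Qe_def by auto
      moreover have KQ2: "K \<in> Q2" using K unfolding Qe_def by auto
      have "cnt m D1 y + cnt m D1 K = 2 * (h - Max K) + 1"
      proof -
        have My: "Max y = Max K" "(Max K - 1 \<in> y) \<longleftrightarrow> Max K - 1 \<notin> K" using tp K(2) by auto
        show ?thesis unfolding cntQ2[OF yQ2] cntQ2[OF KQ2] My(1)
          using My(2) by (cases "Max K - 1 \<in> K") simp_all
      qed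
      ultimately have "odd (cnt m D1 y)" by (metis even_add even_mult_iff odd_one even_numeral)
      then show "y \<in> Qo" using yQ2 unfolding Qo_def by auto
    qed
  qed
  have "card Q2 = card Qo + card Qe"
  proof -
    have "Q2 = Qo \<union> Qe" "Qo \<inter> Qe = {}" unfolding Qo_def Qe_def by auto
    then show ?thesis using finQ2 by (metis card_Un_disjoint finite_Un)
  qed
  then have cQo: "card Qo = 2 ^ (h - 2) - 1"
  proof -
    assume "card Q2 = card Qo + card Qe"
    moreover have "card Qo = card Qe" using bij by (rule bij_betw_same_card)
    moreover have "(2::nat) ^ (h - 1) = 2 * 2 ^ (h - 2)"
    proof -
      have "h - 1 = Suc (h - 2)" using h3 by simp
      then show ?thesis by simp
    qed
    ultimately show ?thesis using cardQ2 by simp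
  qed
  have c0: "cnt m D1 {0} = h + 1"
  proof -
    have "card D1 = h + 1" using D1def by simp
    then show ?thesis using TT_single[OF h3 mdef D1def] unfolding cnt_TT[OF h3 mdef D1def] by simp
  qed
  have c01: "cnt m D1 {0, 1} = h - 1"
    using cnt_Q[of "{0,1}"] h3 by simp
  have "A3 h m D1 = {K \<in> Q. odd (cnt m D1 K)}" unfolding A3_def[OF h3 mdef D1def] Q_def by auto
  also have "\<dots> = {K \<in> {{0}, {0,1}}. odd (cnt m D1 K)} \<union> Qo"
    unfolding Qo_def using Qsplit by auto
  finally have A3eq: "A3 h m D1 = {K \<in> {{0}, {0,1}}. odd (cnt m D1 K)} \<union> Qo" .
  have "card (A3 h m D1) = card {K \<in> {{0::nat}, {0,1}}. odd (cnt m D1 K)} + card Qo"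
    unfolding A3eq
    by (rule card_Un_disjoint) (use disj finQ2 in \<open>auto simp: Qo_def\<close>)
  moreover have "{K \<in> {{0::nat}, {0,1}}. odd (cnt m D1 K)} = (if even h then {{0}, {0,1}} else {})"
    using c0 c01 h3 by auto
  ultimately show ?thesis using cQo by (simp add: card_insert_if)
qed

end


context
  fixes h m :: nat and D1 :: "nat set"
  assumes h3: "h \<ge> 3" and mdef: "m = 2 * h + 1" and D1def: "D1 = {..<h} \<union> {h+1}"
begin

lemma card_Rodd: "card {K. RR h D1 K \<and> odd (cnt m D1 K)} = (if even h then 2 ^ h - 1 else 2 ^ h - 3)"
proof -
  have fin: "finite {K. K \<subseteq> D1}" using D1def by simp
  have f1: "finite (A1 h D1)" "finite (A2 h D1)" "finite (A3 h m D1)"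
    unfolding A1_def[OF h3 mdef D1def] A2_def[OF h3 mdef D1def] A3_def[OF h3 mdef D1def]
    by (auto intro: finite_subset[OF _ fin] finite_subset[of _ "Pow {..<h}"])
  have d1: "A1 h D1 \<inter> A2 h D1 = {}"
    unfolding A1_def[OF h3 mdef D1def] A2_def[OF h3 mdef D1def] by auto
  have d2: "(A1 h D1 \<union> A2 h D1) \<inter> A3 h m D1 = {}"
    unfolding A1_def[OF h3 mdef D1def] A2_def[OF h3 mdef D1def] A3_def[OF h3 mdef D1def] by auto
  have "card {K. RR h D1 K \<and> odd (cnt m D1 K)} = card (A1 h D1) + card (A2 h D1) + card (A3 h m D1)"
    unfolding Rodd_split[OF h3 mdef D1def]
    using f1 d1 d2 by (simp add: card_Un_disjoint)
  also have "\<dots> = (2 ^ (h - 1) - 1) + (2 ^ (h - 2) - 1) + ((if even h then 2 else 0) + 2 ^ (h - 2) - 1)"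
    using card_A1[OF h3 mdef D1def] card_A2[OF h3 mdef D1def] card_A3[OF h3 mdef D1def] by simp
  also have "\<dots> = (if even h then 2 ^ h - 1 else 2 ^ h - 3)"
  proof -
    obtain k where k: "h = k + 3" using h3 by (metis add.commute le_Suc_ex)
    have a: "(2::nat) ^ (h - 1) = 4 * 2 ^ k" "(2::nat) ^ (h - 2) = 2 * 2 ^ k" "(2::nat) ^ h = 8 * 2 ^ k"
      using k by (simp_all add: power_add)
    have "(2::nat) ^ k \<ge> 1" by simp
    have e: "(2::nat) ^ (h - 1) - 1 + (2 ^ (h - 2) - 1) + (c + 2 ^ (h - 2) - 1) = c + 2 ^ h - 3" for c
      unfolding a using \<open>(2::nat) ^ k \<ge> 1\<close> by linarith
    show ?thesis unfolding e by simp
  qed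
  finally show ?thesis .
qed

lemma card_oddE: "card {E. E \<subseteq> {..<m} \<and> E \<noteq> {} \<and> odd (cnt m D1 E)}
   = m * (if even h then 2 ^ h - 1 else 2 ^ h - 3)"
  using card_odd[OF h3 mdef D1def] card_Rodd by simp

end

lemma comb_main:
  fixes h m :: nat
  assumes h3: "h \<ge> 3" and mdef: "m = 2 * h + 1"
  defines "D0 \<equiv> insert 0 {h..<2*h}"
  shows "card {E. E \<subseteq> {..<m} \<and> odd (cnt m D0 E)} = 1 + m * (if even h then 2 ^ h - 1 else 2 ^ h - 3)"
proof -
  define D1 where "D1 = {..<h} \<union> {h+1}"
  have m: "m > 0" using mdef by simp
  have D1m: "D1 \<subseteq> {..<m}" using D1_def mdef h3 by auto
  have D0rot: "D0 = rot m h D1"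
  proof -
    have "rot m h D1 = (\<lambda>x. (x + h) mod m) ` {..<h} \<union> {(h + 1 + h) mod m}"
      unfolding rot_def D1_def by auto
    also have "(\<lambda>x. (x + h) mod m) ` {..<h} = (\<lambda>x. x + h) ` {..<h}"
      using mdef by (intro image_cong refl) simp
    also have "(\<lambda>x. x + h) ` {..<h} = {h..<2*h}"
    proof (intro equalityI subsetI)
      fix x assume "x \<in> {h..<2*h}"
      then show "x \<in> (\<lambda>x. x + h) ` {..<h}" by (intro image_eqI[of _ _ "x - h"]) auto
    qed auto
    also have "h + 1 + h = m" using mdef by simp
    then have "(h + 1 + h) mod m = 0" by simp
    finally show ?thesis unfolding D0_def by auto
  qed
  have cnt_eq: "cnt m D0 E = cnt m D1 E" if "E \<subseteq> {..<m}" for E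
    unfolding D0rot using cnt_rotD[OF m that D1m] .
  have "{E. E \<subseteq> {..<m} \<and> odd (cnt m D0 E)} = insert {} {E. E \<subseteq> {..<m} \<and> E \<noteq> {} \<and> odd (cnt m D1 E)}"
  proof -
    have "cnt m D0 {} = m" unfolding cnt_def rot_def by simp
    then have "odd (cnt m D0 {})" using mdef by simp
    then show ?thesis using cnt_eq by auto
  qed
  moreover have "finite {E. E \<subseteq> {..<m} \<and> E \<noteq> {} \<and> odd (cnt m D1 E)}"
    by (rule finite_subset[of _ "Pow {..<m}"]) auto
  ultimately show ?thesis using card_oddE[OF h3 mdef D1_def] by simp
qed

lemma comb_run:
  fixes h m :: nat
  assumes h3: "h \<ge> 3" and mdef: "m = 2 * h + 1"
    and J: "J \<subseteq> {..<h-1}" "J \<noteq> {}"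
  defines "D0 \<equiv> insert 0 {h..<2*h}"
  shows "cnt m D0 (J \<union> {h, 2*h}) = 1"
proof -
  define D1 where "D1 = {..<h} \<union> {h+1}"
  have m: "m > 0" using mdef by simp
  have D1m: "D1 \<subseteq> {..<m}" using D1_def mdef h3 by auto
  let ?E = "J \<union> {h, 2*h}"
  have Em: "?E \<subseteq> {..<m}" using J mdef by auto
  have D0rot: "D0 = rot m h D1"
  proof -
    have "rot m h D1 = (\<lambda>x. (x + h) mod m) ` {..<h} \<union> {(h + 1 + h) mod m}"
      unfolding rot_def D1_def by auto
    also have "(\<lambda>x. (x + h) mod m) ` {..<h} = (\<lambda>x. x + h) ` {..<h}"
      using mdef by (intro image_cong refl) simp
    also have "(\<lambda>x. x + h) ` {..<h} = {h..<2*h}"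
    proof (intro equalityI subsetI)
      fix x assume "x \<in> {h..<2*h}"
      then show "x \<in> (\<lambda>x. x + h) ` {..<h}" by (intro image_eqI[of _ _ "x - h"]) auto
    qed auto
    also have "h + 1 + h = m" using mdef by simp
    then have "(h + 1 + h) mod m = 0" by simp
    finally show ?thesis unfolding D0_def by auto
  qed
  have "cnt m D0 ?E = cnt m D1 ?E" unfolding D0rot using cnt_rotD[OF m Em D1m] .
  also have "\<dots> = cnt m D1 (rot m 1 ?E)" using cnt_rot[OF m Em D1m] by simp
  also have "rot m 1 ?E = insert 0 (insert (h+1) ((\<lambda>j. j + 1) ` J))"
  proof -
    have "rot m 1 ?E = (\<lambda>x. (x + 1) mod m) ` J \<union> {(h + 1) mod m, (2*h+1) mod m}"
      unfolding rot_def by auto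
    also have "(\<lambda>x. (x + 1) mod m) ` J = (\<lambda>j. j + 1) ` J"
      using J mdef by (intro image_cong refl) auto
    also have "(h + 1) mod m = h + 1" using mdef h3 by simp
    also have "(2*h+1) mod m = 0" using mdef by simp
    finally show ?thesis by auto
  qed
  also have "cnt m D1 (insert 0 (insert (h+1) ((\<lambda>j. j + 1) ` J))) = 1"
  proof -
    let ?F = "insert 0 (insert (h+1) ((\<lambda>j. j + 1) ` J))"
    have "?F \<subseteq> D1" using J h3 unfolding D1_def by auto
    moreover have "?F \<noteq> {0, h+1}"
    proof
      assume F: "?F = {0, h+1}"
      obtain j where "j \<in> J" using J by auto
      then have "j + 1 \<in> {0, h+1}" using F by blast
      then show False using \<open>j \<in> J\<close> J by auto
    qed
    ultimately have "TT m D1 ?F = {0}" using TT_R1z[OF h3 mdef D1_def] by simp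
    then show ?thesis using cnt_TT[OF h3 mdef D1_def] by simp
  qed
  finally show ?thesis .
qed


lemma of_bit_ne0: "x \<noteq> 0 \<Longrightarrow> (of_bit x :: 'a::zero_neq_one) \<noteq> 0"
  by (cases x) simp_all

lemma degree_map_of_bit: "degree (map_poly (of_bit :: bit \<Rightarrow> 'a::zero_neq_one) g) = degree g"
  by (rule degree_map_poly) (rule of_bit_ne0)

lemma coeff_map_of_bit: "coeff (map_poly (of_bit :: bit \<Rightarrow> 'a::zero_neq_one) g) j = of_bit (coeff g j)"
  by (rule coeff_map_poly) simp

context
  fixes \<beta> :: "'i \<Rightarrow> 'a::field" and S :: "'i set" and s :: "nat \<Rightarrow> bit"
  assumes two: "(2::'a) = 0" and finS: "finite S" and injb: "inj_on \<beta> S"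
    and nz: "\<forall>E\<in>S. \<beta> E \<noteq> 0"
    and seq: "\<forall>t. (of_bit (s t) :: 'a) = (\<Sum>E\<in>S. \<beta> E ^ t)"
begin

lemma rec_sum:
  assumes i: "i \<ge> degree g"
  shows "(of_bit (\<Sum>j\<le>degree g. coeff g j * s (i - j)) :: 'a)
    = (\<Sum>E\<in>S. \<beta> E ^ i * poly (map_poly of_bit g) (inverse (\<beta> E)))"
proof -
  let ?G = "map_poly (of_bit :: bit \<Rightarrow> 'a) g"
  have "(of_bit (\<Sum>j\<le>degree g. coeff g j * s (i - j)) :: 'a)
      = (\<Sum>j\<le>degree g. of_bit (coeff g j) * (\<Sum>E\<in>S. \<beta> E ^ (i - j)))"
    by (simp only: of_bit_sum[OF two] of_bit_mult[OF two] seq)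
  also have "\<dots> = (\<Sum>E\<in>S. \<Sum>j\<le>degree g. of_bit (coeff g j) * \<beta> E ^ (i - j))"
    by (simp add: sum_distrib_left sum.swap[of _ S])
  also have "\<dots> = (\<Sum>E\<in>S. \<beta> E ^ i * poly ?G (inverse (\<beta> E)))"
  proof (rule sum.cong[OF refl])
    fix E assume E: "E \<in> S"
    have "\<beta> E ^ i * poly ?G (inverse (\<beta> E)) = (\<Sum>j\<le>degree g. of_bit (coeff g j) * (\<beta> E ^ i * inverse (\<beta> E) ^ j))"
      unfolding poly_altdef degree_map_of_bit coeff_map_of_bit
      by (simp only: sum_distrib_left mult.assoc mult.commute mult.left_commute)
    also have "\<dots> = (\<Sum>j\<le>degree g. of_bit (coeff g j) * \<beta> E ^ (i - j))"
    proof (rule sum.cong[OF refl])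
      fix j assume "j \<in> {..degree g}"
      then have "j \<le> i" using i by simp
      then have "\<beta> E ^ (i - j) = \<beta> E ^ i / \<beta> E ^ j" using nz E by (simp add: power_diff)
      then show "of_bit (coeff g j) * (\<beta> E ^ i * inverse (\<beta> E) ^ j) = of_bit (coeff g j) * \<beta> E ^ (i - j)"
        by (simp add: divide_inverse power_inverse)
    qed
    finally show "(\<Sum>j\<le>degree g. of_bit (coeff g j) * \<beta> E ^ (i - j)) = \<beta> E ^ i * poly ?G (inverse (\<beta> E))" by simp
  qed
  finally show ?thesis .
qed

lemma LB:
  assumes lr: "lin_rec g s"
  shows "\<forall>E\<in>S. poly (map_poly (of_bit :: bit \<Rightarrow> 'a) g) (inverse (\<beta> E)) = 0" "card S \<le> degree g"
proof -
  let ?G = "map_poly (of_bit :: bit \<Rightarrow> 'a) g"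
  have c0: "coeff g 0 = 1" and rec: "\<forall>i\<ge>degree g. (\<Sum>j\<le>degree g. coeff g j * s (i - j)) = 0"
    using lr unfolding lin_rec_def by auto
  have "\<forall>l. degree g \<le> l \<and> l < degree g + card S \<longrightarrow> (\<Sum>E\<in>S. poly ?G (inverse (\<beta> E)) * \<beta> E ^ l) = 0"
  proof (intro allI impI)
    fix l assume "degree g \<le> l \<and> l < degree g + card S"
    then have "(of_bit (\<Sum>j\<le>degree g. coeff g j * s (l - j)) :: 'a) = 0" using rec by simp
    then show "(\<Sum>E\<in>S. poly ?G (inverse (\<beta> E)) * \<beta> E ^ l) = 0"
      using rec_sum[of g l] \<open>degree g \<le> l \<and> l < degree g + card S\<close> by (simp add: mult.commute)
  qed
  then show roots: "\<forall>E\<in>S. poly ?G (inverse (\<beta> E)) = 0"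
    using expsum_zero[OF finS injb nz, where L="degree g" and a="\<lambda>E. poly ?G (inverse (\<beta> E))"] by blast
  have G0: "?G \<noteq> 0"
  proof
    assume "?G = 0"
    then have "coeff ?G 0 = 0" by simp
    moreover have "coeff ?G 0 = 1" using c0 by (simp only: coeff_map_of_bit) simp
    ultimately show False by simp
  qed
  have "inj_on (\<lambda>E. inverse (\<beta> E)) S" using injb by (auto simp: inj_on_def)
  then have "card S = card ((\<lambda>E. inverse (\<beta> E)) ` S)" by (simp add: card_image)
  also have "\<dots> \<le> card {x. poly ?G x = 0}"
    by (rule card_mono[OF poly_roots_finite[OF G0]]) (use roots in auto)
  also have "\<dots> \<le> degree ?G" by (rule card_poly_roots_bound[OF G0])
  finally show "card S \<le> degree g" by (simp only: degree_map_of_bit)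
qed

lemma UB:
  assumes P01: "\<forall>k. coeff (\<Prod>E\<in>S. [:1, - \<beta> E:]) k = 0 \<or> coeff (\<Prod>E\<in>S. [:1, - \<beta> E:]) k = 1"
  shows "\<exists>g0. lin_rec g0 s \<and> degree g0 = card S"
proof -
  define P where "P = (\<Prod>E\<in>S. [:1, - \<beta> E:])"
  define g0 where "g0 = map_poly (\<lambda>c::'a. if c = 0 then 0 else (1::bit)) P"
  have mapg0: "map_poly (of_bit :: bit \<Rightarrow> 'a) g0 = P"
  proof (rule poly_eqI)
    fix k
    show "coeff (map_poly of_bit g0) k = coeff P k"
    proof -
      have "coeff g0 k = (if coeff P k = 0 then 0 else 1)"
        unfolding g0_def by (subst coeff_map_poly) simp_all
      moreover have "coeff P k = 0 \<or> coeff P k = 1" using P01 unfolding P_def by blast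
      ultimately show ?thesis unfolding coeff_map_of_bit by auto
    qed
  qed
  have degP: "degree P = card S"
    unfolding P_def using nz by (subst degree_prod_eq_sum_degree) auto
  have degg0: "degree g0 = card S" by (metis degP mapg0 degree_map_of_bit)
  have "coeff P 0 = 1"
    unfolding P_def poly_0_coeff_0[symmetric] poly_prod by simp
  then have "(of_bit (coeff g0 0) :: 'a) = 1" using mapg0 by (metis coeff_map_of_bit)
  then have c0: "coeff g0 0 = 1" by (cases "coeff g0 0") simp_all
  have Proot: "poly P (inverse (\<beta> E)) = 0" if "E \<in> S" for E
    unfolding P_def poly_prod using that finS nz by (auto intro!: prod_zero bexI[OF _ that])
  have "(\<Sum>j\<le>degree g0. coeff g0 j * s (i - j)) = 0" if "i \<ge> degree g0" for i
  proof -
    have "(of_bit (\<Sum>j\<le>degree g0. coeff g0 j * s (i - j)) :: 'a) = 0"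
      using rec_sum[OF that] mapg0 Proot by simp
    then show ?thesis by (simp add: of_bit_eq0[OF two])
  qed
  then have "lin_rec g0 s" unfolding lin_rec_def using c0 by auto
  then show ?thesis using degg0 by blast
qed

end


lemma frob_iter:
  fixes y :: "'a::{finite,field}"
  assumes card: "card (UNIV::'a set) = 2 ^ m"
  shows "y ^ (2 ^ (k * m)) = y"
proof (induction k)
  case 0 then show ?case by simp
next
  case (Suc k)
  have "y ^ (2 ^ (Suc k * m)) = (y ^ (2 ^ (k * m))) ^ (2 ^ m)"
    by (simp add: power_add power_mult[symmetric] mult.commute)
  also have "\<dots> = y" using Suc fin_fermat[of y] card by simp
  finally show ?case .
qed

lemma frob_mod:
  fixes y :: "'a::{finite,field}"
  assumes card: "card (UNIV::'a set) = 2 ^ m"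
  shows "y ^ (2 ^ (n mod m)) = y ^ (2 ^ n)"
proof -
  have "n = (n div m) * m + n mod m" by simp
  then have "y ^ (2 ^ n) = (y ^ (2 ^ (n mod m))) ^ (2 ^ ((n div m) * m))"
    by (metis power_add power_mult mult.commute)
  also have "\<dots> = y ^ (2 ^ (n mod m))" using frob_iter[OF card] by simp
  finally show ?thesis by simp
qed

lemma inj_rotmap: "E \<subseteq> {..<(m::nat)} \<Longrightarrow> inj_on (\<lambda>i. (i + (t::nat)) mod m) E"
proof (rule inj_onI)
  fix x y assume E: "E \<subseteq> {..<m}" and xy: "x \<in> E" "y \<in> E" "(x + t) mod m = (y + t) mod m"
  then have "rot m (m - t mod m) {(x + t) mod m} = rot m (m - t mod m) {(y + t) mod m}" by simp
  moreover have "rot m (m - t mod m) {(x + t) mod m} = {x}"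
  proof -
    have "{(x + t) mod m} = rot m (t mod m) {x}" unfolding rot_def by (simp add: mod_add_right_eq)
    then show ?thesis using rot_inv[of "{x}" m "t mod m"] xy E by auto
  qed
  moreover have "rot m (m - t mod m) {(y + t) mod m} = {y}"
  proof -
    have "{(y + t) mod m} = rot m (t mod m) {y}" unfolding rot_def by (simp add: mod_add_right_eq)
    then show ?thesis using rot_inv[of "{y}" m "t mod m"] xy E by auto
  qed
  ultimately show "x = y" by simp
qed

lemma gamma_rot:
  fixes \<alpha> :: "'a::{finite,field}"
  assumes card: "card (UNIV::'a set) = 2 ^ m" and E: "E \<subseteq> {..<m}"
  shows "\<alpha> ^ set_encode (rot m t E) = (\<alpha> ^ set_encode E) ^ (2 ^ t)"
proof -
  have fin: "finite E" using E finite_subset by blast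
  have "set_encode (rot m t E) = (\<Sum>i\<in>E. 2 ^ ((i + t) mod m))"
    unfolding set_encode_def rot_def by (simp add: sum.reindex[OF inj_rotmap[OF E]])
  then have "\<alpha> ^ set_encode (rot m t E) = (\<Prod>i\<in>E. \<alpha> ^ (2 ^ ((i + t) mod m)))"
    by (simp add: power_sum)
  also have "\<dots> = (\<Prod>i\<in>E. (\<alpha> ^ (2 ^ i)) ^ (2 ^ t))"
    by (rule prod.cong[OF refl]) (simp add: frob_mod[OF card] power_add power_mult[symmetric])
  also have "\<dots> = (\<Prod>i\<in>E. \<alpha> ^ (2 ^ i)) ^ (2 ^ t)" by (simp add: prod_power_distrib)
  also have "(\<Prod>i\<in>E. \<alpha> ^ (2 ^ i)) = \<alpha> ^ set_encode E"
    unfolding set_encode_def by (simp add: power_sum)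
  finally show ?thesis .
qed

lemma set_encode_lessThan: "set_encode {..<n} = 2 ^ n - 1"
proof (induction n)
  case 0 then show ?case by simp
next
  case (Suc n)
  have "set_encode {..<Suc n} = 2 ^ n + set_encode {..<n}"
    by (simp add: lessThan_Suc)
  then show ?case using Suc by simp
qed

lemma set_encode_proper:
  assumes "E \<subseteq> {..<n}" "E \<noteq> {..<n}"
  shows "set_encode E < 2 ^ n - 1"
proof -
  have fin: "finite ({..<n} - E)" by simp
  obtain x where x: "x \<in> {..<n} - E" using assms by blast
  have "set_encode {..<n} = set_encode E + set_encode ({..<n} - E)"
    unfolding set_encode_def using sum.subset_diff[OF assms(1), of "(^) 2"] by (simp add: add.commute)
  moreover have "set_encode ({..<n} - E) \<ge> 2 ^ x"
    unfolding set_encode_def using x by (intro member_le_sum) auto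
  moreover have "(2::nat) ^ x > 0" by simp
  ultimately show ?thesis using set_encode_lessThan[of n] by linarith
qed

lemma set_decode_bound:
  assumes "x < 2 ^ k"
  shows "set_decode x \<subseteq> {..<k}"
proof
  fix n assume "n \<in> set_decode x"
  then have "odd (x div 2 ^ n)" unfolding set_decode_def by simp
  then have "x div 2 ^ n \<ge> 1" by (metis div_0 even_zero less_one not_le)
  then have "x \<ge> 2 ^ n" by (metis div_less not_le le_zero_eq one_neq_zero)
  then have "(2::nat) ^ n < 2 ^ k" using assms by linarith
  then show "n \<in> {..<k}" by simp
qed


lemma binom_expand:
  fixes y :: "'a::field"
  assumes two: "(2::'a) = 0" and fin: "finite K0"
  shows "(y + 1) ^ set_encode K0 = (\<Sum>K\<in>Pow K0. y ^ set_encode K)"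
proof -
  have "(y + 1) ^ set_encode K0 = (\<Prod>i\<in>K0. (y + 1) ^ (2 ^ i))"
    unfolding set_encode_def by (simp add: power_sum)
  also have "\<dots> = (\<Prod>i\<in>K0. y ^ (2 ^ i) + 1)"
    by (simp add: frob_add[OF two])
  also have "\<dots> = (\<Sum>X\<in>Pow K0. (\<Prod>i\<in>X. y ^ (2 ^ i)) * (\<Prod>i\<in>K0 - X. 1))"
    by (rule prod_add[OF fin])
  also have "\<dots> = (\<Sum>K\<in>Pow K0. y ^ set_encode K)"
    unfolding set_encode_def by (simp add: power_sum)
  finally show ?thesis .
qed

lemma set_encode_D0: "set_encode (insert 0 {h..<2*h}) = 2 ^ (2 * h) - 2 ^ h + 1"
proof -
  have "set_encode {..<2*h} = set_encode {..<h} + set_encode {h..<2*h}"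
  proof -
    have "{..<2*h} = {..<h} \<union> {h..<2*h}" by auto
    moreover have "sum ((^) (2::nat)) ({..<h} \<union> {h..<2*h}) = sum ((^) 2) {..<h} + sum ((^) 2) {h..<2*h}"
      by (rule sum.union_disjoint) auto
    ultimately show ?thesis unfolding set_encode_def by simp
  qed
  then have "set_encode {h..<2*h} = 2 ^ (2 * h) - 2 ^ h"
  proof -
    have "(2::nat) ^ h \<ge> 1" "(2::nat) ^ (2*h) \<ge> 1" by simp_all
    then show ?thesis using \<open>set_encode {..<2*h} = _\<close> set_encode_lessThan[of "2*h"] set_encode_lessThan[of h] by linarith
  qed
  moreover have "(2::nat) ^ h \<le> 2 ^ (2 * h)" by (rule power_increasing) auto
  ultimately show ?thesis by (cases "h = 0") (simp_all add: set_encode_def)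
qed

lemma map_sq_mult:
  fixes p q :: "'a::field poly"
  assumes two: "(2::'a) = 0"
  shows "map_poly (\<lambda>x. x^2) (p * q) = map_poly (\<lambda>x. x^2) p * map_poly (\<lambda>x. x^2) q"
proof (rule poly_eqI)
  fix n
  have "coeff (map_poly (\<lambda>x. x^2) (p * q)) n = (\<Sum>i\<le>n. coeff p i * coeff q (n - i)) ^ 2"
    by (simp add: coeff_map_poly coeff_mult)
  also have "\<dots> = (\<Sum>i\<le>n. (coeff p i * coeff q (n - i)) ^ 2)"
    using frob_sum[OF two, of "{..n}" "\<lambda>i. coeff p i * coeff q (n - i)" 1] by simp
  also have "\<dots> = coeff (map_poly (\<lambda>x. x^2) p * map_poly (\<lambda>x. x^2) q) n"
    by (simp add: coeff_map_poly coeff_mult power_mult_distrib)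
  finally show "coeff (map_poly (\<lambda>x. x^2) (p * q)) n = coeff (map_poly (\<lambda>x. x^2) p * map_poly (\<lambda>x. x^2) q) n" .
qed

lemma map_sq_prod:
  fixes f :: "'i \<Rightarrow> 'a::field poly"
  assumes two: "(2::'a) = 0"
  shows "map_poly (\<lambda>x. x^2) (\<Prod>E\<in>A. f E) = (\<Prod>E\<in>A. map_poly (\<lambda>x. x^2) (f E))"
proof (induction A rule: infinite_finite_induct)
  case (infinite A) then show ?case by (simp add: map_poly_pCons one_pCons)
next
  case empty then show ?case by (simp add: map_poly_pCons one_pCons)
next
  case (insert x F) then show ?case by (simp add: map_sq_mult[OF two])
qed

lemma map_sq_lin: "map_poly (\<lambda>x. x^2) [:1, c:] = [:1, c^2::'a::field:]"
  by (simp add: map_poly_pCons)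

definition D0 :: "nat \<Rightarrow> nat set" where "D0 h = insert 0 {h..<2*h}"
definition SS :: "nat \<Rightarrow> nat \<Rightarrow> nat set set" where
  "SS m h = {E. E \<subseteq> {..<m} \<and> odd (cnt m (D0 h) E)}"

context
  fixes m h :: nat and \<alpha> :: "'a::{finite,field}"
  assumes card: "card (UNIV::'a set) = 2 ^ m" and mh: "m = 2 * h + 1" and h3: "h \<ge> 3"
    and prim: "primitive_elem \<alpha>"
begin

lemma two: "(2::'a) = 0" using char2_of_card[OF card] mh by simp

lemma anz: "\<alpha> \<noteq> 0" using prim unfolding primitive_elem_def by simp

lemma av: "\<alpha> ^ (2 ^ m - 1) = 1" using fin_fermat1[OF anz] card by simp

lemma ainj: assumes "a < 2 ^ m - 1" "b < 2 ^ m - 1" "\<alpha> ^ a = \<alpha> ^ b" shows "a = b"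
proof (rule ccontr)
  assume ne: "a \<noteq> b"
  have key: "\<alpha> ^ (y - x) = 1" if "x < y" "\<alpha> ^ x = \<alpha> ^ y" for x y
  proof -
    have "y = x + (y - x)" using that by simp
    then have "\<alpha> ^ y = \<alpha> ^ x * \<alpha> ^ (y - x)" by (metis power_add)
    then show ?thesis using that anz by simp
  qed
  have "\<exists>k. 0 < k \<and> k < 2 ^ m - 1 \<and> \<alpha> ^ k = 1"
  proof (cases "a < b")
    case True then show ?thesis using key[of a b] assms by (intro exI[of _ "b - a"]) auto
  next
    case False then have "b < a" using ne by simp
    then show ?thesis using key[of b a] assms by (intro exI[of _ "a - b"]) auto
  qed
  then show False using prim card unfolding primitive_elem_def by auto
qed

lemma D0sub: "D0 h \<subseteq> {..<m}" unfolding D0_def using mh h3 by auto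

lemma rot_full: "rot m t {..<m} = {..<m}"
proof -
  have "rot m t {..<m} \<subseteq> {..<m}" using rot_sub[of m t] mh by simp
  moreover have "card (rot m t {..<m}) = m"
    unfolding rot_def by (simp add: card_image[OF inj_rotmap])
  ultimately show ?thesis by (simp add: card_subset_eq)
qed

lemma cnt_full: "cnt m (D0 h) {..<m} = 0"
proof -
  have "\<not> {..<m} \<subseteq> D0 h"
  proof
    assume "{..<m} \<subseteq> D0 h"
    moreover have "1 \<in> {..<m}" using mh h3 by simp
    ultimately show False using h3 unfolding D0_def by auto
  qed
  then show ?thesis unfolding cnt_def using rot_full by simp
qed

lemma SS_fin: "finite (SS m h)" unfolding SS_def by (rule finite_subset[of _ "Pow {..<m}"]) auto

lemma SS_proper: "E \<in> SS m h \<Longrightarrow> E \<subseteq> {..<m} \<and> E \<noteq> {..<m}"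
  unfolding SS_def using cnt_full by auto

lemma gamma_inj: "inj_on (\<lambda>E. \<alpha> ^ set_encode E) (SS m h)"
proof (rule inj_onI)
  fix E E' assume E: "E \<in> SS m h" "E' \<in> SS m h" "\<alpha> ^ set_encode E = \<alpha> ^ set_encode E'"
  have "set_encode E = set_encode E'"
    using ainj set_encode_proper SS_proper E by blast
  moreover have "finite E" "finite E'" using SS_proper E finite_subset by blast+
  ultimately show "E = E'" using set_encode_eq by blast
qed

lemma gamma_nz: "\<alpha> ^ set_encode E \<noteq> 0" using anz by simp

lemma card_SS: "card (SS m h) = 1 + m * (if even h then 2 ^ h - 1 else 2 ^ h - 3)"
  unfolding SS_def D0_def using comb_main[OF h3 mh] by simp

lemma mm_mod: "t < m \<Longrightarrow> (m - (m - t) mod m) mod m = t"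
  using mh by (cases "t = 0") (auto simp: mod_if2)

lemma fiber_card:
  assumes E: "E \<subseteq> {..<m}"
  shows "card {p \<in> {..<m} \<times> Pow (D0 h). rot m (fst p) (snd p) = E} = cnt m (D0 h) E"
proof -
  have m0: "m > 0" using mh by simp
  let ?T = "{t. t < m \<and> rot m t E \<subseteq> D0 h}"
  let ?F = "{p \<in> {..<m} \<times> Pow (D0 h). rot m (fst p) (snd p) = E}"
  have "bij_betw (\<lambda>t. ((m - t) mod m, rot m t E)) ?T ?F"
  proof (rule bij_betw_byWitness[where f'="\<lambda>p. (m - fst p) mod m"])
    show "\<forall>t\<in>?T. (m - fst ((m - t) mod m, rot m t E)) mod m = t" using mm_mod by auto
    show "\<forall>p\<in>?F. ((m - (m - fst p) mod m) mod m, rot m ((m - fst p) mod m) E) = p"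
    proof
      fix p assume p: "p \<in> ?F"
      obtain i K where pik: "p = (i, K)" by (cases p)
      have i: "i < m" and K: "K \<subseteq> D0 h" and eq: "rot m i K = E" using p pik by auto
      have Km: "K \<subseteq> {..<m}" using K D0sub by auto
      have "rot m ((m - i) mod m) E = rot m ((m - i) mod m + i) K" by (subst eq[symmetric]) (simp add: rot_rot)
      also have "\<dots> = rot m (m - i + i) K" by (simp add: rot_mod_add)
      also have "\<dots> = K" using i rot_m[OF Km] by simp
      finally show "((m - (m - fst p) mod m) mod m, rot m ((m - fst p) mod m) E) = p"
        using pik mm_mod i by simp
    qed
    show "(\<lambda>t. ((m - t) mod m, rot m t E)) ` ?T \<subseteq> ?F"
    proof
      fix q assume "q \<in> (\<lambda>t. ((m - t) mod m, rot m t E)) ` ?T"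
      then obtain t where t: "t < m" "rot m t E \<subseteq> D0 h" "q = ((m - t) mod m, rot m t E)" by auto
      have "rot m ((m - t) mod m) (rot m t E) = rot m ((m - t) mod m + t) E" by (simp add: rot_rot)
      also have "\<dots> = rot m (m - t + t) E" by (simp add: rot_mod_add)
      also have "\<dots> = E" using t rot_m[OF E] by simp
      finally show "q \<in> ?F" using t m0 by auto
    qed
    show "(\<lambda>p. (m - fst p) mod m) ` ?F \<subseteq> ?T"
    proof
      fix t assume "t \<in> (\<lambda>p. (m - fst p) mod m) ` ?F"
      then obtain i K where p: "i < m" "K \<subseteq> D0 h" "rot m i K = E" "t = (m - i) mod m" by auto
      have Km: "K \<subseteq> {..<m}" using p D0sub by auto
      have "rot m t E = rot m ((m - i) mod m + i) K" by (subst p(3)[symmetric]) (simp add: rot_rot p(4))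
      also have "\<dots> = rot m (m - i + i) K" by (simp add: rot_mod_add)
      also have "\<dots> = K" using p rot_m[OF Km] by simp
      finally show "t \<in> ?T" using p m0 by auto
    qed
  qed
  then show ?thesis unfolding cnt_def by (simp add: bij_betw_same_card)
qed

lemma seq:
  "(of_bit (trace_seq m (\<lambda>x. x ^ (2^(2*h) - 2^h + 1)) \<alpha> t) :: 'a) = (\<Sum>E\<in>SS m h. (\<alpha> ^ set_encode E) ^ t)"
proof -
  let ?g = "\<lambda>E. (\<alpha> ^ set_encode E) ^ t"
  have finD: "finite (D0 h)" unfolding D0_def by simp
  have F: "(\<alpha> ^ t + 1) ^ (2^(2*h) - 2^h + 1) = (\<Sum>K\<in>Pow (D0 h). ?g K)"
  proof -
    have "(\<alpha> ^ t + 1) ^ (2^(2*h) - 2^h + 1) = (\<alpha> ^ t + 1) ^ set_encode (D0 h)"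
      unfolding D0_def set_encode_D0 ..
    also have "\<dots> = (\<Sum>K\<in>Pow (D0 h). (\<alpha> ^ t) ^ set_encode K)" by (rule binom_expand[OF two finD])
    finally show ?thesis by (simp add: power_mult[symmetric] mult.commute)
  qed
  let ?z = "(\<Sum>K\<in>Pow (D0 h). ?g K)"
  have "trace2 m ?z = (\<Sum>i<m. \<Sum>K\<in>Pow (D0 h). ?g K ^ (2 ^ i))"
    unfolding trace2_def by (simp add: frob_sum[OF two] finD)
  also have "\<dots> = (\<Sum>i<m. \<Sum>K\<in>Pow (D0 h). ?g (rot m i K))"
  proof (intro sum.cong refl)
    fix i K assume "K \<in> Pow (D0 h)"
    then have Km: "K \<subseteq> {..<m}" using D0sub by auto
    have "?g K ^ (2 ^ i) = ((\<alpha> ^ set_encode K) ^ (2 ^ i)) ^ t"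
      by (simp add: power_mult[symmetric] ac_simps)
    also have "\<dots> = ?g (rot m i K)" using gamma_rot[OF card Km] by simp
    finally show "?g K ^ (2 ^ i) = ?g (rot m i K)" .
  qed
  also have "\<dots> = (\<Sum>p\<in>{..<m} \<times> Pow (D0 h). ?g (rot m (fst p) (snd p)))"
    by (simp add: sum.cartesian_product case_prod_beta)
  also have "\<dots> = (\<Sum>E\<in>Pow {..<m}. \<Sum>p\<in>{p \<in> {..<m} \<times> Pow (D0 h). rot m (fst p) (snd p) = E}. ?g (rot m (fst p) (snd p)))"
    by (rule sum.group[symmetric]) (use finD rot_sub[of m] mh in auto)
  also have "\<dots> = (\<Sum>E\<in>Pow {..<m}. of_nat (cnt m (D0 h) E) * ?g E)"
  proof (rule sum.cong[OF refl])
    fix E assume "E \<in> Pow {..<m}"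
    then have E: "E \<subseteq> {..<m}" by simp
    have "(\<Sum>p\<in>{p \<in> {..<m} \<times> Pow (D0 h). rot m (fst p) (snd p) = E}. ?g (rot m (fst p) (snd p)))
        = (\<Sum>p\<in>{p \<in> {..<m} \<times> Pow (D0 h). rot m (fst p) (snd p) = E}. ?g E)"
      by (rule sum.cong) auto
    also have "\<dots> = of_nat (cnt m (D0 h) E) * ?g E" using fiber_card[OF E] by simp
    finally show "(\<Sum>p\<in>{p \<in> {..<m} \<times> Pow (D0 h). rot m (fst p) (snd p) = E}. ?g (rot m (fst p) (snd p)))
        = of_nat (cnt m (D0 h) E) * ?g E" .
  qed
  also have "\<dots> = (\<Sum>E\<in>Pow {..<m}. if odd (cnt m (D0 h) E) then ?g E else 0)"
    by (rule sum.cong[OF refl]) (simp add: of_nat_c2[OF two])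
  also have "\<dots> = (\<Sum>E\<in>SS m h. ?g E)"
    unfolding SS_def by (simp add: sum.inter_filter[symmetric] Pow_def)
  finally have tr: "trace2 m ?z = (\<Sum>E\<in>SS m h. ?g E)" .
  have "?z ^ (2 ^ m) = ?z" using fin_fermat[of ?z] card by simp
  then have "trace2 m ?z = 0 \<or> trace2 m ?z = 1" by (rule trace_01[OF two])
  then have "(of_bit (if trace2 m ?z = 0 then 0 else 1) :: 'a) = trace2 m ?z" by auto
  then show ?thesis unfolding trace_seq_def F tr[symmetric] by simp
qed

lemma rot1_SS: "rot m 1 ` SS m h = SS m h"
proof -
  have m0: "m > 0" using mh by simp
  have mem: "rot m t E \<in> SS m h" if "E \<in> SS m h" for t E
  proof -
    have E: "E \<subseteq> {..<m}" "odd (cnt m (D0 h) E)" using that unfolding SS_def by auto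
    then show ?thesis unfolding SS_def using cnt_rot[OF m0 E(1) D0sub] rot_sub[OF m0] by auto
  qed
  show ?thesis
  proof (intro equalityI subsetI)
    fix E assume "E \<in> rot m 1 ` SS m h" then show "E \<in> SS m h" using mem by auto
  next
    fix E assume E: "E \<in> SS m h"
    then have Em: "E \<subseteq> {..<m}" unfolding SS_def by auto
    have "rot m 1 (rot m (m - 1) E) = E" using rot_rot[of m 1 "m - 1" E] rot_m[OF Em] m0 by simp
    then show "E \<in> rot m 1 ` SS m h" using mem[OF E] by (metis image_eqI)
  qed
qed

lemma P01:
  "\<forall>k. coeff (\<Prod>E\<in>SS m h. [:1, - (\<alpha> ^ set_encode E):]) k = 0 \<or>
       coeff (\<Prod>E\<in>SS m h. [:1, - (\<alpha> ^ set_encode E):]) k = 1"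
proof
  fix k
  let ?P = "\<Prod>E\<in>SS m h. [:1, - (\<alpha> ^ set_encode E):]"
  have P: "?P = (\<Prod>E\<in>SS m h. [:1, \<alpha> ^ set_encode E:])" by (simp add: c2_neg[OF two])
  have inj: "inj_on (rot m 1) (SS m h)"
    using rot_inj[of _ m _ 1] mh unfolding SS_def inj_on_def by auto
  have "map_poly (\<lambda>x. x^2) ?P = (\<Prod>E\<in>SS m h. [:1, (\<alpha> ^ set_encode E)^2:])"
    unfolding P map_sq_prod[OF two] map_sq_lin ..
  also have "\<dots> = (\<Prod>E\<in>SS m h. [:1, \<alpha> ^ set_encode (rot m 1 E):])"
    by (rule prod.cong[OF refl]) (use gamma_rot[OF card] in \<open>auto simp: SS_def\<close>)
  also have "\<dots> = (\<Prod>E\<in>rot m 1 ` SS m h. [:1, \<alpha> ^ set_encode E:])"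
    using prod.reindex[OF inj, of "\<lambda>E. [:1, \<alpha> ^ set_encode E:]"] by (simp add: o_def)
  also have "\<dots> = ?P" unfolding rot1_SS P ..
  finally have "map_poly (\<lambda>x. x^2) ?P = ?P" .
  moreover have "coeff (map_poly (\<lambda>x. x^2) ?P) k = coeff ?P k ^ 2"
    by (rule coeff_map_poly) simp
  ultimately have "coeff ?P k ^ 2 = coeff ?P k" by simp
  then have "coeff ?P k * (coeff ?P k - 1) = 0" by (simp add: algebra_simps power2_eq_square)
  then show "coeff ?P k = 0 \<or> coeff ?P k = 1" by auto
qed

lemma degree_g:
  assumes "is_min_poly (trace_seq m (\<lambda>x. x ^ (2^(2*h) - 2^h + 1)) \<alpha>) g"
  shows "degree g = card (SS m h)"
    "\<forall>E\<in>SS m h. poly (map_poly (of_bit :: bit \<Rightarrow> 'a) g) (inverse (\<alpha> ^ set_encode E)) = 0"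
proof -
  let ?s = "trace_seq m (\<lambda>x. x ^ (2^(2*h) - 2^h + 1)) \<alpha>"
  have sq: "\<forall>t. (of_bit (?s t) :: 'a) = (\<Sum>E\<in>SS m h. (\<alpha> ^ set_encode E) ^ t)" using seq by blast
  have lr: "lin_rec g ?s" and mn: "\<forall>g'. lin_rec g' ?s \<longrightarrow> degree g \<le> degree g'"
    using assms unfolding is_min_poly_def by auto
  note lb = LB[OF two SS_fin gamma_inj _ sq lr]
  obtain g0 where g0: "lin_rec g0 ?s" "degree g0 = card (SS m h)"
    using UB[OF two SS_fin gamma_inj _ sq P01] gamma_nz by blast
  show "degree g = card (SS m h)" using lb(2) mn g0 gamma_nz by fastforce
  show "\<forall>E\<in>SS m h. poly (map_poly (of_bit :: bit \<Rightarrow> 'a) g) (inverse (\<alpha> ^ set_encode E)) = 0"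
    using lb(1) gamma_nz by blast
qed

end


lemma deg_lt_of_coeff:
  assumes "\<forall>i\<ge>k. coeff q i = 0"
  shows "q = 0 \<or> degree q < k"
proof (cases "q = 0")
  case False
  then have "coeff q (degree q) \<noteq> 0" by simp
  then show ?thesis using assms by (meson not_le)
qed simp

lemma card_bitpolys: "card {q::bit poly. q = 0 \<or> degree q < k} = 2 ^ k"
proof -
  let ?B = "{q::bit poly. q = 0 \<or> degree q < k}"
  let ?L = "{xs::bit list. set xs \<subseteq> UNIV \<and> length xs = k}"
  have "bij_betw (\<lambda>q. map (coeff q) [0..<k]) ?B ?L"
  proof (rule bij_betw_byWitness[where f'=Poly])
    show "\<forall>q\<in>?B. Poly (map (coeff q) [0..<k]) = q"
    proof
      fix q assume q: "q \<in> ?B"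
      show "Poly (map (coeff q) [0..<k]) = q"
      proof (rule poly_eqI)
        fix i
        show "coeff (Poly (map (coeff q) [0..<k])) i = coeff q i"
        proof (cases "i < k")
          case True then show ?thesis by (simp add: nth_default_def)
        next
          case False
          then have "coeff q i = 0" using q by (auto intro: coeff_eq_0)
          then show ?thesis using False by (simp add: nth_default_def)
        qed
      qed
    qed
    show "\<forall>xs\<in>?L. map (coeff (Poly xs)) [0..<k] = xs"
      by (auto intro!: nth_equalityI simp: nth_default_def)
    show "(\<lambda>q. map (coeff q) [0..<k]) ` ?B \<subseteq> ?L" by auto
    show "Poly ` ?L \<subseteq> ?B"
    proof
      fix q assume "q \<in> Poly ` ?L"
      then obtain xs where xs: "length xs = k" "q = Poly xs" by auto
      have "\<forall>i\<ge>k. coeff q i = 0" using xs by (simp add: nth_default_def)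
      then show "q \<in> ?B" using deg_lt_of_coeff by blast
    qed
  qed
  have U: "(UNIV::bit set) = {0, 1}" by (auto intro: bit.exhaust)
  then have fU: "finite (UNIV::bit set)" by (metis finite.emptyI finite_insert)
  from \<open>bij_betw _ ?B ?L\<close> have "card ?B = card ?L" by (rule bij_betw_same_card)
  also have "\<dots> = card (UNIV::bit set) ^ k" by (rule card_lists_length_eq[OF fU])
  also have "card (UNIV::bit set) = 2" by (simp only: U) simp
  finally show ?thesis .
qed

lemma cyclic_code_eq:
  assumes g: "g \<noteq> 0" "degree g \<le> n"
  shows "cyclic_code n g = (\<lambda>q. g * q) ` {q. q = 0 \<or> degree q < n - degree g}"
proof (intro equalityI subsetI)
  fix c assume "c \<in> cyclic_code n g"
  then have c: "c = 0 \<or> degree c < n" "g dvd c" unfolding cyclic_code_def by auto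
  then obtain q where q: "c = g * q" by (auto elim: dvdE)
  have "q = 0 \<or> degree q < n - degree g"
  proof (cases "q = 0")
    case False
    then have "degree c = degree g + degree q" using q g by (simp add: degree_mult_eq)
    moreover have "c \<noteq> 0" using False q g by simp
    ultimately have "degree g + degree q < n" using c by simp
    then show ?thesis by linarith
  qed simp
  then show "c \<in> (\<lambda>q. g * q) ` {q. q = 0 \<or> degree q < n - degree g}" using q by auto
next
  fix c assume "c \<in> (\<lambda>q. g * q) ` {q. q = 0 \<or> degree q < n - degree g}"
  then obtain q where q: "c = g * q" "q = 0 \<or> degree q < n - degree g" by auto
  have "c = 0 \<or> degree c < n"
  proof (cases "q = 0")
    case False
    then have "degree c = degree g + degree q" using q g by (simp add: degree_mult_eq)
    then show ?thesis using q False g by simp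
  qed (use q in simp)
  then show "c \<in> cyclic_code n g" unfolding cyclic_code_def using q by auto
qed

lemma card_cyclic:
  assumes g: "g \<noteq> 0" "degree g \<le> n"
  shows "card (cyclic_code n g) = 2 ^ (n - degree g)"
proof -
  have "inj_on (\<lambda>q. g * q) {q. q = 0 \<or> degree q < n - degree g}"
    using g by (auto simp: inj_on_def)
  then show ?thesis unfolding cyclic_code_eq[OF g] by (simp add: card_image card_bitpolys)
qed

lemma finite_cyclic:
  assumes g: "g \<noteq> 0" "degree g \<le> n"
  shows "finite (cyclic_code n g)"
proof -
  have "card (cyclic_code n g) > 0" using card_cyclic[OF g] by simp
  then show ?thesis by (rule card_ge_0_finite)
qed

lemma hweight_support: "{i. coeff (c::bit poly) i \<noteq> 0} \<subseteq> {..degree c}"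
  by (auto intro: le_degree)

lemma poly_bit_support:
  fixes x :: "'a::field"
  shows "poly (map_poly of_bit c) x = (\<Sum>i\<in>{i. coeff c i \<noteq> 0}. x ^ i)"
proof -
  have "poly (map_poly of_bit c) x = (\<Sum>i\<le>degree c. of_bit (coeff c i) * x ^ i)"
    unfolding poly_altdef degree_map_of_bit coeff_map_of_bit ..
  also have "\<dots> = (\<Sum>i\<in>{..degree c}. if coeff c i \<noteq> 0 then x ^ i else 0)"
    by (rule sum.cong[OF refl]) (auto)
  also have "\<dots> = (\<Sum>i\<in>{i\<in>{..degree c}. coeff c i \<noteq> 0}. x ^ i)"
    by (rule sum.inter_filter[symmetric]) simp
  also have "{i\<in>{..degree c}. coeff c i \<noteq> 0} = {i. coeff c i \<noteq> 0}" using hweight_support by blast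
  finally show ?thesis .
qed

lemma bch:
  fixes c :: "bit poly" and \<beta> :: "'a::field"
  assumes bnz: "\<beta> \<noteq> 0" and inj: "inj_on (\<lambda>j. \<beta> ^ j) {..<n}"
    and c: "c \<noteq> 0" "degree c < n"
    and roots: "\<forall>l<\<delta>. poly (map_poly of_bit c) (\<beta> ^ (b + l)) = 0"
  shows "hweight c > \<delta>"
proof (rule ccontr)
  assume "\<not> hweight c > \<delta>"
  then have le: "card {i. coeff c i \<noteq> 0} \<le> \<delta>" unfolding hweight_def by simp
  let ?J = "{i. coeff c i \<noteq> 0}"
  have finJ: "finite ?J" using hweight_support finite_subset by blast
  have Jn: "?J \<subseteq> {..<n}" using hweight_support c(2) by fastforce
  have injJ: "inj_on (\<lambda>j. \<beta> ^ j) ?J" using inj_on_subset[OF inj Jn] .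
  have "\<forall>l. 0 \<le> l \<and> l < 0 + card ?J \<longrightarrow> (\<Sum>i\<in>?J. \<beta> ^ (b * i) * (\<beta> ^ i) ^ l) = 0"
  proof (intro allI impI)
    fix l assume "0 \<le> l \<and> l < 0 + card ?J"
    then have "l < \<delta>" using le by simp
    then have "poly (map_poly (of_bit :: bit \<Rightarrow> 'a) c) (\<beta> ^ (b + l)) = 0" using roots by blast
    then have "(\<Sum>i\<in>?J. (\<beta> ^ (b + l)) ^ i) = 0" unfolding poly_bit_support .
    moreover have "(\<beta> ^ (b + l)) ^ i = \<beta> ^ (b * i) * (\<beta> ^ i) ^ l" for i
      by (simp add: power_add power_mult_distrib power_mult[symmetric] ac_simps)
    ultimately show "(\<Sum>i\<in>?J. \<beta> ^ (b * i) * (\<beta> ^ i) ^ l) = 0" by simp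
  qed
  then have "\<forall>i\<in>?J. \<beta> ^ (b * i) = 0"
    using expsum_zero[OF finJ injJ, where L=0 and a="\<lambda>i. \<beta> ^ (b * i)"] bnz by auto
  moreover have "degree c \<in> ?J" using c(1) by (simp del: bit_not_zero_iff)
  ultimately show False using bnz by auto
qed


lemma map_of_bit_mult:
  assumes two: "(2::'a::field) = 0"
  shows "map_poly (of_bit :: bit \<Rightarrow> 'a) (p * q) = map_poly of_bit p * map_poly of_bit q"
proof (rule poly_eqI)
  fix n
  show "coeff (map_poly (of_bit :: bit \<Rightarrow> 'a) (p * q)) n = coeff (map_poly of_bit p * map_poly of_bit q) n"
    unfolding coeff_map_of_bit coeff_mult
    by (simp only: of_bit_sum[OF two] of_bit_mult[OF two] coeff_map_of_bit)
qed

lemma two_le_pow: "h \<ge> 3 \<Longrightarrow> 2 * h + 1 \<le> (2::nat) ^ h"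
proof (induction h rule: dec_induct)
  case base then show ?case by simp
next
  case (step n)
  then show ?case by simp
qed

context
  fixes m h :: nat and \<alpha> :: "'a::{finite,field}"
  assumes card: "card (UNIV::'a set) = 2 ^ m" and mh: "m = 2 * h + 1" and h3: "h \<ge> 3"
    and prim: "primitive_elem \<alpha>"
begin

lemma run_in_SS:
  assumes l: "l < 2 ^ (h - 1) - 1"
  shows "\<exists>E\<in>SS m h. set_encode E = 1 + 2 ^ h + 2 ^ (2 * h) + l"
proof -
  let ?J = "set_decode (1 + l)"
  have J: "?J \<subseteq> {..<h-1}" by (rule set_decode_bound) (use l in simp)
  have Jne: "?J \<noteq> {}"
  proof
    assume "?J = {}"
    then have "set_encode ?J = 0" by simp
    then show False by simp
  qed
  let ?E = "?J \<union> {h, 2*h}"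
  have Em: "?E \<subseteq> {..<m}" using J mh by auto
  have "cnt m (D0 h) ?E = 1" unfolding D0_def using comb_run[OF h3 mh J Jne] .
  then have ES: "?E \<in> SS m h" unfolding SS_def using Em by simp
  have "set_encode ?E = set_encode ?J + set_encode {h, 2*h}"
    unfolding set_encode_def using J by (subst sum.union_disjoint) auto
  also have "set_encode {h, 2*h} = 2 ^ h + 2 ^ (2*h)" using h3 by simp
  finally have "set_encode ?E = 1 + 2 ^ h + 2 ^ (2 * h) + l" by simp
  then show ?thesis using ES by blast
qed

lemma final_ctx:
  assumes mp: "is_min_poly (trace_seq m (\<lambda>x. x ^ (2^(2*h) - 2^h + 1)) \<alpha>) g"
  defines "L \<equiv> (if m mod 4 = 1 then 1 + m * (2 ^ h - 1) else 1 + m * (2 ^ h - 3))"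
  shows "degree g = L \<and> card (cyclic_code (2^m - 1) g) = 2 ^ (2^m - 1 - L) \<and>
         2 ^ (h - 1) \<le> min_dist (cyclic_code (2^m - 1) g) \<and> min_dist (cyclic_code (2^m - 1) g) \<le> L"
proof -
  let ?v = "2^m - 1 :: nat"
  let ?C = "cyclic_code ?v g"
  have two': "(2::'a) = 0" by (rule two[OF card mh h3 prim])
  have dg: "degree g = card (SS m h)" using degree_g[OF card mh h3 prim mp] by blast
  have roots: "\<forall>E\<in>SS m h. poly (map_poly (of_bit :: bit \<Rightarrow> 'a) g) (inverse (\<alpha> ^ set_encode E)) = 0"
    using degree_g[OF card mh h3 prim mp] by blast
  have mod4: "(m mod 4 = 1) \<longleftrightarrow> even h" using mh by presburger
  have Leq: "card (SS m h) = L"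
    unfolding L_def card_SS[OF card mh h3 prim] using mod4 by simp
  have degL: "degree g = L" using dg Leq by simp
  have hp: "2 * h + 1 \<le> (2::nat) ^ h" by (rule two_le_pow[OF h3])
  define x where "x = (2::nat) ^ h"
  have x8: "x \<ge> 8" unfolding x_def using power_increasing[OF h3, of "2::nat"] by simp
  have xx: "x * x \<ge> 64" using mult_le_mono[OF x8 x8] by simp
  have pow_m: "(2::nat) ^ m = 2 * (x * x)" unfolding x_def using mh by (simp add: power_add power_mult_distrib[symmetric] mult_2)
  have "L \<le> 1 + m * (2 ^ h - 1)" unfolding L_def by (auto intro: mult_le_mono)
  also have "m * (2 ^ h - 1) \<le> x * x" unfolding x_def using hp mh by (intro mult_le_mono) auto
  finally have "L \<le> 1 + x * x" by simp
  then have Lv: "L < ?v" using pow_m xx by linarith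
  have lr: "lin_rec g (trace_seq m (\<lambda>x. x ^ (2^(2*h) - 2^h + 1)) \<alpha>)"
    using mp unfolding is_min_poly_def by simp
  then have g0: "g \<noteq> 0" unfolding lin_rec_def by auto
  have gC: "g \<in> ?C" unfolding cyclic_code_def using degL Lv by simp
  have cardC: "card ?C = 2 ^ (?v - L)" using card_cyclic[OF g0] degL Lv by simp
  have finC: "finite ?C" using finite_cyclic[OF g0] degL Lv by simp
  have hw_ge: "hweight c \<ge> 2 ^ (h - 1)" if cC: "c \<in> ?C - {0}" for c
  proof -
    have c: "c \<noteq> 0" "degree c < ?v" "g dvd c" using cC unfolding cyclic_code_def by auto
    obtain q where q: "c = g * q" using c(3) by (auto elim: dvdE)
    have bnz: "inverse \<alpha> \<noteq> 0" using anz[OF card mh h3 prim] by simp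
    have inj: "inj_on (\<lambda>j. inverse \<alpha> ^ j) {..<?v}"
    proof (rule inj_onI)
      fix i j assume ij: "i \<in> {..<?v}" "j \<in> {..<?v}" "inverse \<alpha> ^ i = inverse \<alpha> ^ j"
      then have "\<alpha> ^ i = \<alpha> ^ j" by (simp add: power_inverse)
      then show "i = j" using ainj[OF card mh h3 prim] ij by simp
    qed
    have roots_c: "\<forall>l<(2::nat) ^ (h - 1) - 1. poly (map_poly of_bit c) (inverse \<alpha> ^ (((1::nat) + 2 ^ h + 2 ^ (2 * h)) + l)) = (0::'a)"
    proof (intro allI impI)
      fix l :: nat assume l: "l < 2 ^ (h - 1) - 1"
      obtain E where E: "E \<in> SS m h" "set_encode E = 1 + 2 ^ h + 2 ^ (2 * h) + l"
        using run_in_SS[OF l] by blast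
      have "inverse \<alpha> ^ (((1::nat) + 2 ^ h + 2 ^ (2 * h)) + l) = inverse (\<alpha> ^ set_encode E)"
        using E by (simp add: power_inverse)
      moreover have "poly (map_poly (of_bit :: bit \<Rightarrow> 'a) g) (inverse (\<alpha> ^ set_encode E)) = 0"
        using roots E by blast
      ultimately show "poly (map_poly of_bit c) (inverse \<alpha> ^ (((1::nat) + 2 ^ h + 2 ^ (2 * h)) + l)) = (0::'a)"
        unfolding q map_of_bit_mult[OF two'] by simp
    qed
    have "hweight c > 2 ^ (h - 1) - 1" by (rule bch[OF bnz inj c(1) c(2) roots_c])
    moreover have "(2::nat) ^ (h - 1) \<ge> 1" by simp
    ultimately show ?thesis by linarith
  qed
  have Leven: "even L"
  proof -
    have "odd m" using mh by simp
    moreover have "odd ((2::nat) ^ h - 1)" using h3 by simp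
    moreover have "odd ((2::nat) ^ h - 3)"
    proof -
      have hs: "h = Suc (h - 1)" using h3 by simp
      define z where "z = (2::nat) ^ (h - 1)"
      have "(2::nat) ^ h = 2 * z" unfolding z_def by (subst hs) simp
      moreover have "z \<ge> 2" unfolding z_def
        using power_increasing[of 1 "h - 1" "2::nat"] h3 by simp
      ultimately show ?thesis by presburger
    qed
    ultimately show ?thesis unfolding L_def by auto
  qed
  have hw_g: "hweight g \<le> L"
  proof (rule ccontr)
    assume "\<not> hweight g \<le> L"
    let ?J = "{i. coeff g i \<noteq> 0}"
    have sub: "?J \<subseteq> {..L}" using hweight_support[of g] degL by simp
    have "card ?J \<le> card {..L}" by (rule card_mono) (use sub in auto)
    then have "card ?J = L + 1" using \<open>\<not> hweight g \<le> L\<close> unfolding hweight_def by simp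
    then have Jeq: "?J = {..L}" using sub by (intro card_subset_eq) auto
    have "poly (map_poly (of_bit :: bit \<Rightarrow> 'a) g) 1 = (\<Sum>i\<in>?J. 1 ^ i)"
      by (rule poly_bit_support)
    also have "\<dots> = of_nat (L + 1)" using Jeq by simp
    also have "\<dots> = 1" using of_nat_c2[OF two', of "L+1"] Leven by simp
    finally have p1: "poly (map_poly (of_bit :: bit \<Rightarrow> 'a) g) 1 = 1" .
    have "{} \<in> SS m h"
    proof -
      have "cnt m (D0 h) {} = m" unfolding cnt_def rot_def by simp
      then show ?thesis unfolding SS_def using mh by simp
    qed
    then have "poly (map_poly (of_bit :: bit \<Rightarrow> 'a) g) (inverse (\<alpha> ^ set_encode {})) = 0"
      using roots by blast
    then show False using p1 by simp
  qed
  have ne: "?C - {0} \<noteq> {}" using gC g0 by auto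
  have fin2: "finite (hweight ` (?C - {0}))" using finC by simp
  have "2 ^ (h - 1) \<le> min_dist ?C"
    unfolding min_dist_def using hw_ge ne fin2 by (subst Min_ge_iff) auto
  moreover have "min_dist ?C \<le> L"
  proof -
    have "min_dist ?C \<le> hweight g" unfolding min_dist_def using fin2 gC g0 by (intro Min_le) auto
    then show ?thesis using hw_g by simp
  qed
  ultimately show ?thesis using degL cardC by simp
qed

end


theorem theorem5:
  fixes m :: nat and \<alpha> :: "'a::{finite,field}" and g :: "bit poly"
  assumes "odd m" and "m \<ge> 7"
    and "card (UNIV::'a set) = 2 ^ m"
    and "primitive_elem \<alpha>"
    and "is_min_poly (trace_seq m (\<lambda>x. x ^ (2 ^ (2 * ((m - 1) div 2)) - 2 ^ ((m - 1) div 2) + 1)) \<alpha>) g"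
  shows "let h = (m - 1) div 2;
             L = (if m mod 4 = 1 then 1 + m * (2 ^ h - 1) else 1 + m * (2 ^ h - 3));
             v = 2 ^ m - 1;
             C = cyclic_code v g
         in degree g = L \<and> card C = 2 ^ (v - L) \<and>
            2 ^ ((m - 3) div 2) \<le> min_dist C \<and> min_dist C \<le> L"
proof -
  define h where "h = (m - 1) div 2"
  have mh: "m = 2 * h + 1" using assms(1) unfolding h_def by presburger
  have h3: "h \<ge> 3" using assms(2) mh by simp
  have m3: "(m - 3) div 2 = h - 1" using mh by simp
  have mp: "is_min_poly (trace_seq m (\<lambda>x. x ^ (2^(2*h) - 2^h + 1)) \<alpha>) g"
    using assms(5) unfolding h_def .
  note F = final_ctx[OF assms(3) mh h3 assms(4) mp]
  show ?thesis unfolding Let_def h_def[symmetric] m3 using F by simp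
qed


end
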